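(* Let $k\ge 3$ be an odd integer. If $H\in M_{0,1,2,\ldots,k-2,k-1}$, then $H$ has a Fulkerson-cover.
   Context: All graphs are finite. A Fulkerson-cover of a cubic graph is a collection of six perfect matchings such that every edge belongs to exactly two of them. A cubic graph is cyclically 4-edge-connected if at least 4 edges must be removed to disconnect it into two components each containing a circuit. The family $M_{0,1,\ldots,k-1}$ ($k\ge 2$): Let $G_0,G_1,\ldots,G_{k-1}$ be bridgeless, cyclically 4-edge-connected cubic graphs, each having a Fulkerson-cover. In each $G_i$ choose an edge $x_iy_i$, let $x_i^0,x_i^1$ be the two neighbours of $x_i$ other than $y_i$, let $y_i^0,y_i^1$ be the two neighbours of $y_i$ other than $x_i$, and let $H_i=G_i\setminus\{x_i,y_i\}$ (delete the two vertices and their incident edges). The graph $\{G;G_0,\ldots,G_{k-1}\}$ is obtained from the disjoint union of $H_0,\ldots,H_{k-1}$ by adding new vertices $a_j,b_j,c_j$ for $0\le j\le k-1$ and $v_0,\ldots,v_{k-3}$ (none if $k=2$), and the following edges, with indices of $x$ taken modulo $k$: - for each $0\le j\le k-1$: $a_jy_j^0$, $a_jx_{j+1}^0$, $b_jy_j^1$, $b_jx_{j+1}^1$, $a_jc_j$, $b_jc_j$; - the edges of the path $c_1v_0v_1\cdots v_{k-3}c_0$ (for $k=2$ this is the single edge $c_0c_1$); - for each $2\le i\le k-1$: the edge $c_iv_{i-2}$. (Equivalently, it is built recursively: for $k=2$ take the graph above with edge $c_0c_1$; for $i=3,\ldots,k$, add $H_{i-1}$ and $a_{i-1},b_{i-1},c_{i-1}$,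 subdivide the edge at $c_0$ not of the form $a_0c_0,b_0c_0$ by a new vertex $v_{i-3}$, join $c_{i-1}$ to $a_{i-1},b_{i-1},v_{i-3}$, make $a_{i-1}$ adjacent to $x_0^0,y_{i-1}^0$, $b_{i-1}$ adjacent to $x_0^1,y_{i-1}^1$, and replace the edges $a_{i-2}x_0^0$, $b_{i-2}x_0^1$ by $a_{i-2}x_{i-1}^0$, $b_{i-2}x_{i-1}^1$.) $M_{0,1,\ldots,k-1}$ denotes the set of all graphs obtained this way, over all such choices of $G_i$, edges $x_iy_i$ and labelings of neighbours. *)

theory Defs
  imports Main
begin

definition graph :: "'a set \<Rightarrow> 'a set set \<Rightarrow> bool" where
  "graph V E \<longleftrightarrow> finite V \<and> (\<forall>e\<in>E. \<exists>u v. e = {u, v} \<and> u \<noteq> v \<and> u \<in> V \<and> v \<in> V)"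

definition degree :: "'a set set \<Rightarrow> 'a \<Rightarrow> nat" where
  "degree E v = card {e \<in> E. v \<in> e}"

definition cubic :: "'a set \<Rightarrow> 'a set set \<Rightarrow> bool" where
  "cubic V E \<longleftrightarrow> graph V E \<and> (\<forall>v\<in>V. degree E v = 3)"

definition perfect_matching :: "'a set \<Rightarrow> 'a set set \<Rightarrow> 'a set set \<Rightarrow> bool" where
  "perfect_matching V E M \<longleftrightarrow> M \<subseteq> E \<and> (\<forall>v\<in>V. \<exists>!e. e \<in> M \<and> v \<in> e)"

definition has_fulkerson_cover :: "'a set \<Rightarrow> 'a set set \<Rightarrow> bool" where
  "has_fulkerson_cover V E \<longleftrightarrow>
     (\<exists>M :: nat \<Rightarrow> 'a set set. (\<forall>i<6. perfect_matching V E (M i)) \<and>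
        (\<forall>e\<in>E. card {i. i < 6 \<and> e \<in> M i} = 2))"

definition reachable :: "'a set set \<Rightarrow> 'a \<Rightarrow> 'a \<Rightarrow> bool" where
  "reachable E u v \<longleftrightarrow> (\<lambda>a b. {a, b} \<in> E)\<^sup>*\<^sup>* u v"

definition bridgeless :: "'a set \<Rightarrow> 'a set set \<Rightarrow> bool" where
  "bridgeless V E \<longleftrightarrow> (\<forall>e\<in>E. \<forall>u v. e = {u, v} \<longrightarrow> reachable (E - {e}) u v)"

definition has_circuit_in :: "'a set set \<Rightarrow> 'a set \<Rightarrow> bool" where
  "has_circuit_in E S \<longleftrightarrow>
     (\<exists>cs. length cs \<ge> 3 \<and> distinct cs \<and> set cs \<subseteq> S \<and>
        (\<forall>i<length cs. {cs ! i, cs ! ((i + 1) mod length cs)} \<in> E))"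

definition cut_edges :: "'a set set \<Rightarrow> 'a set \<Rightarrow> 'a set set" where
  "cut_edges E S = {e \<in> E. e \<inter> S \<noteq> {} \<and> e - S \<noteq> {}}"

definition cyclically_4_edge_connected :: "'a set \<Rightarrow> 'a set set \<Rightarrow> bool" where
  "cyclically_4_edge_connected V E \<longleftrightarrow>
     (\<forall>S\<subseteq>V. has_circuit_in E S \<and> has_circuit_in E (V - S) \<longrightarrow> card (cut_edges E S) \<ge> 4)"

datatype 'a mvert = Old nat 'a | VA nat | VB nat | VC nat | VV nat

definition valid_choice ::
  "'a set \<Rightarrow> 'a set set \<Rightarrow> 'a \<Rightarrow> 'a \<Rightarrow> 'a \<Rightarrow> 'a \<Rightarrow> 'a \<Rightarrow> 'a \<Rightarrow> bool" where
  "valid_choice V E x y x0 x1 y0 y1 \<longleftrightarrow>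
     {x, y} \<in> E \<and>
     {x, x0} \<in> E \<and> {x, x1} \<in> E \<and> x0 \<noteq> x1 \<and> x0 \<noteq> y \<and> x1 \<noteq> y \<and>
     {y, y0} \<in> E \<and> {y, y1} \<in> E \<and> y0 \<noteq> y1 \<and> y0 \<noteq> x \<and> y1 \<noteq> x"

definition path_edges :: "'b list \<Rightarrow> 'b set set" where
  "path_edges xs = set (map (\<lambda>(a, b). {a, b}) (zip xs (tl xs)))"

definition M_vertices ::
  "nat \<Rightarrow> (nat \<Rightarrow> 'a set) \<Rightarrow> (nat \<Rightarrow> 'a) \<Rightarrow> (nat \<Rightarrow> 'a) \<Rightarrow> 'a mvert set" where
  "M_vertices k V x y =
     {Old i u | i u. i < k \<and> u \<in> V i - {x i, y i}}
     \<union> {VA j | j. j < k} \<union> {VB j | j. j < k} \<union> {VC j | j. j < k}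
     \<union> {VV j | j. j < k - 2}"

definition M_edges ::
  "nat \<Rightarrow> (nat \<Rightarrow> 'a set set) \<Rightarrow> (nat \<Rightarrow> 'a) \<Rightarrow> (nat \<Rightarrow> 'a) \<Rightarrow>
   (nat \<Rightarrow> 'a) \<Rightarrow> (nat \<Rightarrow> 'a) \<Rightarrow> (nat \<Rightarrow> 'a) \<Rightarrow> (nat \<Rightarrow> 'a) \<Rightarrow> 'a mvert set set" where
  "M_edges k E x y x0 x1 y0 y1 =
     {{Old i u, Old i w} | i u w. i < k \<and> {u, w} \<in> E i \<and> u \<notin> {x i, y i} \<and> w \<notin> {x i, y i}}
     \<union> (\<Union>j<k. {{VA j, Old j (y0 j)},
                 {VA j, Old ((j + 1) mod k) (x0 ((j + 1) mod k))},
                 {VB j, Old j (y1 j)},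
                 {VB j, Old ((j + 1) mod k) (x1 ((j + 1) mod k))},
                 {VA j, VC j}, {VB j, VC j}})
     \<union> path_edges ([VC 1] @ map VV [0..<k - 2] @ [VC 0])
     \<union> {{VC i, VV (i - 2)} | i. 2 \<le> i \<and> i < k}"

end

theory Submission
  imports Defs
begin


definition pm :: "'a set set \<Rightarrow> 'a \<Rightarrow> 'a" where
  "pm M v = (THE w. {v, w} \<in> M)"

lemma pm_props:
  assumes g: "graph V E" and p: "perfect_matching V E M" and v: "v \<in> V"
  shows "{v, pm M v} \<in> M" "pm M v \<in> V" "pm M v \<noteq> v" "pm M (pm M v) = v"
    "\<And>w. ({v, w} \<in> M) = (pm M v = w)"
proof -
  from p v obtain e where e: "e \<in> M" "v \<in> e" and uq: "\<And>e'. e' \<in> M \<Longrightarrow> v \<in> e' \<Longrightarrow> e' = e"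
    unfolding perfect_matching_def by blast
  have ME: "M \<subseteq> E" using p unfolding perfect_matching_def by blast
  then obtain a b where ab: "e = {a, b}" "a \<noteq> b" "a \<in> V" "b \<in> V"
    using g e unfolding graph_def by blast
  define w where "w = (if a = v then b else a)"
  have ew: "e = {v, w}" "w \<noteq> v" "w \<in> V" using ab e unfolding w_def by auto
  have iff: "\<And>w'. ({v, w'} \<in> M) = (w' = w)"
  proof
    fix w' assume "{v, w'} \<in> M"
    then have "{v, w'} = {v, w}" using uq ew by auto
    then show "w' = w" using ew by (metis doubleton_eq_iff)
  qed (use e ew in auto)
  then have pmw: "pm M v = w" unfolding pm_def by auto
  show "{v, pm M v} \<in> M" "pm M v \<in> V" "pm M v \<noteq> v" using pmw ew e by auto
  show "\<And>w'. ({v, w'} \<in> M) = (pm M v = w')" using iff pmw by auto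
  from p ew obtain e2 where e2: "e2 \<in> M" "w \<in> e2" and uq2: "\<And>e'. e' \<in> M \<Longrightarrow> w \<in> e' \<Longrightarrow> e' = e2"
    unfolding perfect_matching_def by blast
  have "\<And>u. ({w, u} \<in> M) = (u = v)"
  proof
    fix u assume "{w, u} \<in> M"
    then have "{w, u} = {w, v}" using uq2 ew e by (metis insertI1 insert_commute)
    then show "u = v" using ew by (metis doubleton_eq_iff)
  qed (use e ew in \<open>auto simp: insert_commute\<close>)
  then show "pm M (pm M v) = v" using pmw unfolding pm_def by auto
qed

lemma partner_pm:
  assumes "\<forall>v\<in>V. p v \<in> V \<and> p v \<noteq> v \<and> p (p v) = v \<and> {v, p v} \<in> E"
  shows "perfect_matching V E ((\<lambda>v. {v, p v}) ` V)"
    and "u \<in> V \<Longrightarrow> ({u, w} \<in> (\<lambda>v. {v, p v}) ` V) = (p u = w)"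
proof -
  show "perfect_matching V E ((\<lambda>v. {v, p v}) ` V)"
    unfolding perfect_matching_def
  proof (intro conjI ballI)
    show "(\<lambda>v. {v, p v}) ` V \<subseteq> E" using assms by auto
    fix v assume v: "v \<in> V"
    show "\<exists>!e. e \<in> (\<lambda>v. {v, p v}) ` V \<and> v \<in> e"
    proof (rule ex1I[of _ "{v, p v}"])
      show "{v, p v} \<in> (\<lambda>v. {v, p v}) ` V \<and> v \<in> {v, p v}" using v by auto
      fix e assume "e \<in> (\<lambda>v. {v, p v}) ` V \<and> v \<in> e"
      then obtain v' where "v' \<in> V" "e = {v', p v'}" "v \<in> e" by auto
      then show "e = {v, p v}" using assms by auto
    qed
  qed
  assume u: "u \<in> V"
  show "({u, w} \<in> (\<lambda>v. {v, p v}) ` V) = (p u = w)"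
  proof
    assume "{u, w} \<in> (\<lambda>v. {v, p v}) ` V"
    then obtain v where v: "v \<in> V" "{u, w} = {v, p v}" by auto
    then show "p u = w" using assms u by (metis doubleton_eq_iff)
  qed (use u in auto)
qed

lemma bij_count:
  assumes "bij_betw f {..<n} {..<n}"
  shows "card {s. s < n \<and> R (f s)} = card {t. t < n \<and> R t}"
proof -
  have "f ` {s. s < n \<and> R (f s)} = {t. t < n \<and> R t}"
    using assms unfolding bij_betw_def by auto
  moreover have "inj_on f {s. s < n \<and> R (f s)}"
    using assms unfolding bij_betw_def by (auto intro: inj_on_subset)
  ultimately show ?thesis by (metis card_image)
qed

lemma cubic_nbrs:
  assumes c: "cubic V E" and v: "v \<in> V" and e: "{v,a} \<in> E" "{v,b} \<in> E" "{v,c} \<in> E"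
    and d: "a \<noteq> b" "a \<noteq> c" "b \<noteq> c" and w: "{v, w} \<in> E"
  shows "w \<in> {a, b, c}"
proof -
  have g: "graph V E" and dg: "degree E v = 3" using c v unfolding cubic_def by auto
  have fin: "finite E"
  proof -
    have "E \<subseteq> Pow V" using g unfolding graph_def by auto
    moreover have "finite V" using g unfolding graph_def by auto
    ultimately show ?thesis by (meson finite_Pow_iff finite_subset)
  qed
  have sub: "{{v,a},{v,b},{v,c}} \<subseteq> {e \<in> E. v \<in> e}" using e by auto
  have "card {{v,a},{v,b},{v,c}} = 3" using d by (auto simp: doubleton_eq_iff)
  moreover have "card {e \<in> E. v \<in> e} = 3" using dg unfolding degree_def .
  ultimately have "{{v,a},{v,b},{v,c}} = {e \<in> E. v \<in> e}"
    using sub fin by (metis (no_types, lifting) card_subset_eq finite_subset mem_Collect_eq subsetI)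
  then have "{v, w} \<in> {{v,a},{v,b},{v,c}}" using w by auto
  then show ?thesis by (auto simp: doubleton_eq_iff)
qed



lemma pairing4:
  fixes a1 a2 a3 a4 b1 b2 b3 b4 :: bool
  assumes "of_bool a1 + of_bool a2 + of_bool a3 + of_bool a4 = (2::nat)"
    "of_bool b1 + of_bool b2 + of_bool b3 + of_bool b4 = (2::nat)"
  shows "(a1\<noteq>a2 \<and> b1\<noteq>b2 \<and> a3\<noteq>a4 \<and> b3\<noteq>b4) \<or> (a1\<noteq>a3 \<and> b1\<noteq>b3 \<and> a2\<noteq>a4 \<and> b2\<noteq>b4)
     \<or> (a1\<noteq>a4 \<and> b1\<noteq>b4 \<and> a2\<noteq>a3 \<and> b2\<noteq>b3)"
  using assms by (cases a1; cases a2; cases a3; cases a4; cases b1; cases b2; cases b3; cases b4) auto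

lemma filter_insert': "{t \<in> insert a A. P t} = (if P a then insert a {t\<in>A. P t} else {t\<in>A. P t})"
  by auto

lemma card4_filter:
  assumes "distinct [a,b,c,d]"
  shows "card {t \<in> {a,b,c,d}. P t} = of_bool (P a) + of_bool (P b) + of_bool (P c) + of_bool (P d)"
  using assms by (simp only: filter_insert') (cases "P a"; cases "P b"; cases "P c"; cases "P d"; simp)

lemma card4_obtain:
  assumes "card W = 4"
  obtains a b c d where "W = {a,b,c,d}" "distinct [a,b,c,d]"
proof -
  have "card W = Suc (Suc (Suc (Suc 0)))" using assms by simp
  then obtain a W1 where "W = insert a W1" "a \<notin> W1" "card W1 = Suc (Suc (Suc 0))"
    by (metis card_Suc_eq)
  moreover then obtain b W2 where "W1 = insert b W2" "b \<notin> W2" "card W2 = Suc (Suc 0)"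
    by (metis card_Suc_eq)
  moreover then obtain c d where "W2 = {c, d}" "c \<noteq> d"
    by (metis card_2_iff numeral_2_eq_2)
  ultimately show ?thesis using that by auto
qed

lemma pairing_obtain:
  assumes W: "W = {w1,w2,w3,w4}" "distinct [w1,w2,w3,w4]"
    and s: "of_bool (A w1) + of_bool (A w2) + of_bool (A w3) + of_bool (A w4) = (2::nat)"
      "of_bool (B w1) + of_bool (B w2) + of_bool (B w3) + of_bool (B w4) = (2::nat)"
  shows "\<exists>p1 p2 p3 p4. {p1,p2,p3,p4} = W \<and> distinct [p1,p2,p3,p4] \<and>
     A p1 \<noteq> A p2 \<and> B p1 \<noteq> B p2 \<and> A p3 \<noteq> A p4 \<and> B p3 \<noteq> B p4"
  using pairing4[OF s]
proof (elim disjE)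
  assume "A w1 \<noteq> A w2 \<and> B w1 \<noteq> B w2 \<and> A w3 \<noteq> A w4 \<and> B w3 \<noteq> B w4"
  then show ?thesis using W by (intro exI[of _ w1] exI[of _ w2] exI[of _ w3] exI[of _ w4]) simp
next
  assume "A w1 \<noteq> A w3 \<and> B w1 \<noteq> B w3 \<and> A w2 \<noteq> A w4 \<and> B w2 \<noteq> B w4"
  then show ?thesis using W by (intro exI[of _ w1] exI[of _ w3] exI[of _ w2] exI[of _ w4]) (auto simp: W)
next
  assume "A w1 \<noteq> A w4 \<and> B w1 \<noteq> B w4 \<and> A w2 \<noteq> A w3 \<and> B w2 \<noteq> B w3"
  then show ?thesis using W by (intro exI[of _ w1] exI[of _ w4] exI[of _ w2] exI[of _ w3]) (auto simp: W)
qed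


lemma graph_edge_ne: "graph V E \<Longrightarrow> {u, w} \<in> E \<Longrightarrow> u \<noteq> w \<and> u \<in> V \<and> w \<in> V"
  unfolding graph_def by (metis doubleton_eq_iff)

lemma card_split6:
  "card {t. t < (n::nat) \<and> P t} + card {t. t < n \<and> \<not> P t} = n"
proof -
  have "{..<n} = {t. t < n \<and> P t} \<union> {t. t < n \<and> \<not> P t}" by auto
  moreover have "card ({t. t < n \<and> P t} \<union> {t. t < n \<and> \<not> P t}) =
     card {t. t < n \<and> P t} + card {t. t < n \<and> \<not> P t}"
    by (rule card_Un_disjoint) auto
  ultimately show ?thesis by (metis card_lessThan)
qed

locale compx =
  fixes V :: "'a set" and E :: "'a set set" and x y x0 x1 y0 y1 :: 'a and q :: "nat \<Rightarrow> 'a \<Rightarrow> 'a"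
  assumes vc: "valid_choice V E x y x0 x1 y0 y1"
  and gr: "graph V E"
  and nx: "\<And>w. {x,w} \<in> E \<Longrightarrow> w \<in> {y,x0,x1}"
  and ny: "\<And>w. {y,w} \<in> E \<Longrightarrow> w \<in> {x,y0,y1}"
  and qV: "\<And>t v. t < 6 \<Longrightarrow> v \<in> V \<Longrightarrow> q t v \<in> V"
  and qne: "\<And>t v. t < 6 \<Longrightarrow> v \<in> V \<Longrightarrow> q t v \<noteq> v"
  and qinv: "\<And>t v. t < 6 \<Longrightarrow> v \<in> V \<Longrightarrow> q t (q t v) = v"
  and qE: "\<And>t v. t < 6 \<Longrightarrow> v \<in> V \<Longrightarrow> {v, q t v} \<in> E"
  and qc: "\<And>u w. {u,w} \<in> E \<Longrightarrow> card {t. t < 6 \<and> q t u = w} = 2"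
begin

lemma basic: "x \<in> V" "y \<in> V" "x \<noteq> y" "x0 \<noteq> x" "x1 \<noteq> x" "y0 \<noteq> y" "y1 \<noteq> y"
  "x0 \<noteq> x1" "y0 \<noteq> y1" "x0 \<noteq> y" "x1 \<noteq> y" "y0 \<noteq> x" "y1 \<noteq> x"
  "x0 \<in> V" "x1 \<in> V" "y0 \<in> V" "y1 \<in> V"
proof -
  have v: "{x, y} \<in> E" "{x, x0} \<in> E" "{x, x1} \<in> E" "x0 \<noteq> x1" "x0 \<noteq> y" "x1 \<noteq> y"
     "{y, y0} \<in> E" "{y, y1} \<in> E" "y0 \<noteq> y1" "y0 \<noteq> x" "y1 \<noteq> x"
    using vc unfolding valid_choice_def by auto
  show "x \<in> V" "y \<in> V" "x \<noteq> y" "x0 \<noteq> x" "x1 \<noteq> x" "y0 \<noteq> y" "y1 \<noteq> y"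
  "x0 \<noteq> x1" "y0 \<noteq> y1" "x0 \<noteq> y" "x1 \<noteq> y" "y0 \<noteq> x" "y1 \<noteq> x"
  "x0 \<in> V" "x1 \<in> V" "y0 \<in> V" "y1 \<in> V"
    using v graph_edge_ne[OF gr] by metis+
qed

lemma qx: "t < 6 \<Longrightarrow> q t x \<in> {y, x0, x1}"
  using nx qE basic by blast
lemma qy: "t < 6 \<Longrightarrow> q t y \<in> {x, y0, y1}"
  using ny qE basic by blast
lemma qxy: "t < 6 \<Longrightarrow> (q t x = y) = (q t y = x)"
  using qinv basic by metis

lemma cZ: "card {t. t < 6 \<and> q t x = y} = 2" using qc vc unfolding valid_choice_def by blast
lemma cW: "card {t. t < 6 \<and> q t x \<noteq> y} = 4" using card_split6[of 6 "\<lambda>t. q t x = y"] cZ by simp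
lemma cx1: "card {t. t < 6 \<and> q t x = x1} = 2" using qc vc unfolding valid_choice_def by blast
lemma cy1: "card {t. t < 6 \<and> q t y = y1} = 2" using qc vc unfolding valid_choice_def by blast

lemma exists_f:
  fixes bN bL bR :: nat
  assumes b: "bN < 3" "bL < 3" "bR < 3" "bN \<noteq> bL" "bN \<noteq> bR" "bL \<noteq> bR"
  shows "\<exists>f. bij_betw f {..<6} {..<6} \<and> (\<forall>s<6. (q (f s) x = y) = (s div 2 = bN)) \<and>
     (\<forall>s<6. s div 2 = bL \<longrightarrow> (q (f s) x = x1) = (cL = even s) \<and>
          (q (f s) y = y1) = ((q (f (2*bL)) y = y1) = even s)) \<and>
     (\<forall>s<6. s div 2 = bR \<longrightarrow> (q (f s) y = y1) = (cR = even s))"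
proof -
  define Z where "Z = {t. t < 6 \<and> q t x = y}"
  define W where "W = {t. t < 6 \<and> q t x \<noteq> y}"
  obtain z1 z2 where Zz: "Z = {z1, z2}" "z1 \<noteq> z2" using cZ unfolding Z_def by (meson card_2_iff)
  obtain w1 w2 w3 w4 where Ww: "W = {w1,w2,w3,w4}" "distinct [w1,w2,w3,w4]"
    using cW unfolding W_def by (rule card4_obtain)
  have WX: "{t. t < 6 \<and> q t x = x1} = {t \<in> W. q t x = x1}" unfolding W_def using basic by auto
  have WY: "{t. t < 6 \<and> q t y = y1} = {t \<in> W. q t y = y1}" unfolding W_def using basic qxy by auto
  have s1: "of_bool (q w1 x = x1) + of_bool (q w2 x = x1) + of_bool (q w3 x = x1) + of_bool (q w4 x = x1) = (2::nat)"
    using cx1 WX card4_filter[OF Ww(2), of "\<lambda>t. q t x = x1"] Ww(1) by simp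
  have s2: "of_bool (q w1 y = y1) + of_bool (q w2 y = y1) + of_bool (q w3 y = y1) + of_bool (q w4 y = y1) = (2::nat)"
    using cy1 WY card4_filter[OF Ww(2), of "\<lambda>t. q t y = y1"] Ww(1) by simp
  have "\<exists>p1 p2 p3 p4. {p1,p2,p3,p4} = W \<and> distinct [p1,p2,p3,p4] \<and>
     (q p1 x = x1) \<noteq> (q p2 x = x1) \<and> (q p1 y = y1) \<noteq> (q p2 y = y1) \<and>
     (q p3 x = x1) \<noteq> (q p4 x = x1) \<and> (q p3 y = y1) \<noteq> (q p4 y = y1)"
    by (rule pairing_obtain[OF Ww s1 s2])
  then obtain p1 p2 p3 p4 where P: "{p1,p2,p3,p4} = W" "distinct [p1,p2,p3,p4]"
     "(q p1 x = x1) \<noteq> (q p2 x = x1)" "(q p1 y = y1) \<noteq> (q p2 y = y1)"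
     "(q p3 x = x1) \<noteq> (q p4 x = x1)" "(q p3 y = y1) \<noteq> (q p4 y = y1)" by blast
  define l1 where "l1 = (if (q p1 x = x1) = cL then p1 else p2)"
  define l2 where "l2 = (if (q p1 x = x1) = cL then p2 else p1)"
  define r1 where "r1 = (if (q p3 y = y1) = cR then p3 else p4)"
  define r2 where "r2 = (if (q p3 y = y1) = cR then p4 else p3)"
  have L: "(q l1 x = x1) = cL" "(q l2 x = x1) = (\<not> cL)" "(q l2 y = y1) = (\<not> (q l1 y = y1))"
    unfolding l1_def l2_def using P by auto
  have R: "(q r1 y = y1) = cR" "(q r2 y = y1) = (\<not> cR)"
    unfolding r1_def r2_def using P by auto
  have all6: "{z1,z2,l1,l2,r1,r2} = {..<6}"
  proof -
    have "{..<6} = Z \<union> W" unfolding Z_def W_def by auto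
    also have "\<dots> = {z1,z2,l1,l2,r1,r2}" unfolding Zz(1) P(1)[symmetric] l1_def l2_def r1_def r2_def
      by auto
    finally show ?thesis by simp
  qed
  have dist: "distinct [z1,z2,l1,l2,r1,r2]"
  proof -
    have "Z \<inter> W = {}" unfolding Z_def W_def by auto
    then show ?thesis using Zz P unfolding l1_def l2_def r1_def r2_def by auto
  qed
  have inW: "l1 \<in> W" "l2 \<in> W" "r1 \<in> W" "r2 \<in> W" "z1 \<in> Z" "z2 \<in> Z"
    using P Zz unfolding l1_def l2_def r1_def r2_def by auto
  define f where "f s = (if s div 2 = bN then (if even s then z1 else z2)
      else if s div 2 = bL then (if even s then l1 else l2) else (if even s then r1 else r2))" for s :: nat
  have cases3: "\<And>s::nat. s < 6 \<Longrightarrow> s div 2 = bN \<or> s div 2 = bL \<or> s div 2 = bR"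
  proof -
    fix s :: nat assume "s < 6"
    then have "s div 2 < 3" by simp
    then show "s div 2 = bN \<or> s div 2 = bL \<or> s div 2 = bR" using b by linarith
  qed
  have img: "f ` {..<6} = {..<6}"
  proof
    show "f ` {..<6} \<subseteq> {..<6}" using all6 unfolding f_def by auto
    have "z1 = f (2*bN)" "z2 = f (2*bN+1)" "l1 = f (2*bL)" "l2 = f (2*bL+1)" "r1 = f (2*bR)" "r2 = f (2*bR+1)"
      unfolding f_def using b by auto
    moreover have "2*bN < 6" "2*bN+1 < (6::nat)" "2*bL < 6" "2*bL+1 < (6::nat)" "2*bR < 6" "2*bR+1 < (6::nat)"
      using b by auto
    ultimately have "{z1,z2,l1,l2,r1,r2} \<subseteq> f ` {..<6}"
      by (metis (no_types, lifting) empty_subsetI image_eqI insert_subset lessThan_iff)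
    then show "{..<6} \<subseteq> f ` {..<6}" using all6 by simp
  qed
  have bij: "bij_betw f {..<6} {..<6}"
    unfolding bij_betw_def using img eq_card_imp_inj_on[of "{..<6::nat}" f] by simp
  have P1: "\<forall>s<6. (q (f s) x = y) = (s div 2 = bN)"
  proof (intro allI impI)
    fix s :: nat assume s: "s < 6"
    show "(q (f s) x = y) = (s div 2 = bN)"
      using cases3[OF s] inW b unfolding f_def Z_def W_def by auto
  qed
  have fL: "f (2*bL) = l1" unfolding f_def using b by auto
  have P2: "\<forall>s<6. s div 2 = bL \<longrightarrow> (q (f s) x = x1) = (cL = even s) \<and>
          (q (f s) y = y1) = ((q (f (2*bL)) y = y1) = even s)"
    unfolding fL using L b unfolding f_def by auto
  have P3: "\<forall>s<6. s div 2 = bR \<longrightarrow> (q (f s) y = y1) = (cR = even s)"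
    using R b unfolding f_def by auto
  show ?thesis using bij P1 P2 P3 by blast
qed

end


definition shb :: "nat \<Rightarrow> nat" where
  "shb j = (if j = 0 then 0 else if j = 1 then 1 else 2)"

definition Tr :: "nat \<Rightarrow> nat \<Rightarrow> 'a mvert \<Rightarrow> 'a mvert" where
  "Tr k s v = (case v of
     VV m \<Rightarrow> (if s div 2 = 0 then (if m = k - 3 then VC 0 else if even m then VV (m + 1) else VV (m - 1))
             else if s div 2 = 1 then (if m = 0 then VC 1 else if odd m then VV (m + 1) else VV (m - 1))
             else VC (m + 2))
   | VC j \<Rightarrow> (if s div 2 = 0 then VV (k - 3) else if s div 2 = 1 then VV 0 else VV (j - 2))
   | _ \<Rightarrow> v)"

definition treeE :: "nat \<Rightarrow> 'a mvert set set" where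
  "treeE k = {{VC 1, VV 0}, {VV (k - 3), VC 0}} \<union> {{VV m, VV (Suc m)} | m. Suc m < k - 2}
     \<union> {{VC i, VV (i - 2)} | i. 2 \<le> i \<and> i < k}"

lemma path_edges_nth: "path_edges xs = {{xs ! i, xs ! Suc i} | i. Suc i < length xs}"
proof -
  have "path_edges xs = (\<lambda>(a, b). {a, b}) ` set (zip xs (tl xs))"
    unfolding path_edges_def by simp
  also have "set (zip xs (tl xs)) = {(xs ! i, xs ! Suc i) | i. Suc i < length xs}"
    by (auto simp: set_zip nth_tl)
  finally show ?thesis by auto
qed

lemma pathL_nth:
  assumes "3 \<le> k"
  defines "L \<equiv> [VC 1] @ map VV [0..<k - 2] @ [VC 0]"
  shows "length L = k" "L ! 0 = VC 1" "\<And>i. 1 \<le> i \<Longrightarrow> i \<le> k - 2 \<Longrightarrow> L ! i = VV (i - 1)"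
    "L ! (k - 1) = VC 0"
proof -
  show "length L = k" unfolding L_def using assms by simp
  show "L ! 0 = VC 1" unfolding L_def by simp
  fix i assume "1 \<le> i" "i \<le> k - 2"
  then show "L ! i = VV (i - 1)" unfolding L_def using assms
    by (simp add: nth_append)
next
  have "length L = k" unfolding L_def using assms by simp
  then have "L ! (k - 1) = last L" using assms
    by (metis last_conv_nth list.size(3) not_numeral_le_zero)
  then show "L ! (k - 1) = VC 0" unfolding L_def by simp
qed

lemma path_tree0:
  fixes L :: "'a mvert list"
  assumes "3 \<le> k"
  and N: "length L = k" "L ! 0 = VC 1" "\<And>i. 1 \<le> i \<Longrightarrow> i \<le> k - 2 \<Longrightarrow> L ! i = VV (i - 1)"
    "L ! (k - 1) = VC 0"
  shows "path_edges L \<union> {{VC i, VV (i - 2)} | i. 2 \<le> i \<and> i < k}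
     = (treeE k :: 'a mvert set set)"
proof -
  let ?L = L
  have "path_edges ?L = {{VC 1, VV 0}, {VV (k - 3), VC 0}} \<union> {{VV m, VV (Suc m)} | m. Suc m < k - 2}"
  proof
    show "path_edges ?L \<subseteq> {{VC 1, VV 0}, {VV (k - 3), VC 0}} \<union> {{VV m, VV (Suc m)} | m. Suc m < k - 2}"
    proof
      fix e assume "e \<in> path_edges ?L"
      then obtain i where i: "Suc i < k" "e = {?L ! i, ?L ! Suc i}"
        unfolding path_edges_nth using N(1) by auto
      show "e \<in> {{VC 1, VV 0}, {VV (k - 3), VC 0}} \<union> {{VV m, VV (Suc m)} | m. Suc m < k - 2}"
      proof (cases "i = 0")
        case True
        then show ?thesis using i N(2) N(3)[of 1] assms by auto
      next
        case False
        show ?thesis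
        proof (cases "Suc i = k - 1")
          case True
          then have "i = k - 2" by simp
          then show ?thesis using i N(3)[of i] N(4) True False assms
            by (auto simp: numeral_3_eq_3)
        next
          case False2: False
          then have "?L ! i = VV (i - 1)" "?L ! Suc i = VV i" using N(3) i False by auto
          moreover have "Suc (i - 1) < k - 2" using i False False2 by auto
          ultimately show ?thesis using i False by (auto intro!: exI[of _ "i - 1"])
        qed
      qed
    qed
  next
    show "{{VC 1, VV 0}, {VV (k - 3), VC 0}} \<union> {{VV m, VV (Suc m)} | m. Suc m < k - 2} \<subseteq> path_edges ?L"
    proof -
      have a: "{VC 1, VV 0} \<in> path_edges ?L"
        unfolding path_edges_nth using N(1) N(2) N(3)[of 1] assms by (auto intro!: exI[of _ 0])
      have kk: "Suc (k - 2) = k - 1" "k - 2 - 1 = k - 3" using assms by auto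
      have b: "{VV (k - 3), VC 0} \<in> path_edges ?L"
        unfolding path_edges_nth using N(1) N(4) N(3)[of "k-2"] assms kk
        by (auto intro!: exI[of _ "k-2"])
      have c: "{VV m, VV (Suc m)} \<in> path_edges ?L" if "Suc m < k - 2" for m
        unfolding path_edges_nth using N(1) N(3)[of "Suc m"] N(3)[of "Suc (Suc m)"] that
        by (auto intro!: exI[of _ "Suc m"])
      show ?thesis using a b c by blast
    qed
  qed
  then show ?thesis unfolding treeE_def by auto
qed

lemma path_tree:
  assumes "3 \<le> k"
  shows "path_edges ([VC 1] @ map VV [0..<k - 2] @ [VC 0]) \<union> {{VC i, VV (i - 2)} | i. 2 \<le> i \<and> i < k}
     = (treeE k :: 'a mvert set set)"
  by (rule path_tree0[OF assms pathL_nth[OF assms]])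



lemma tree_VV:
  assumes k: "odd k" "3 \<le> k" and m: "m < k - 2" and s: "s < (6::nat)"
  shows "(\<exists>m'. Tr k s (VV m) = (VV m' :: 'a mvert) \<and> m' < k - 2 \<and> m' \<noteq> m \<and> Tr k s (VV m') = (VV m :: 'a mvert)
            \<and> {VV m, VV m'} \<in> (treeE k :: 'a mvert set set))
       \<or> (\<exists>j. Tr k s (VV m) = (VC j :: 'a mvert) \<and> j < k \<and> s div 2 = shb j \<and> Tr k s (VC j) = (VV m :: 'a mvert)
            \<and> {VV m, VC j} \<in> (treeE k :: 'a mvert set set))"
proof -
  have sd: "s div 2 = 0 \<or> s div 2 = 1 \<or> s div 2 = 2" using s by linarith
  have ek: "even (k - 3)" using k by simp
  consider "s div 2 = 0" "m = k - 3" | "s div 2 = 0" "m \<noteq> k - 3" "even m" | "s div 2 = 0" "m \<noteq> k - 3" "odd m"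
    | "s div 2 = 1" "m = 0" | "s div 2 = 1" "m \<noteq> 0" "odd m" | "s div 2 = 1" "m \<noteq> 0" "even m"
    | "s div 2 = 2" using sd by fastforce
  then show ?thesis
  proof cases
    case 1
    have "Tr k s (VV m) = (VC 0 :: 'a mvert)" "Tr k s (VC 0) = (VV m :: 'a mvert)" "s div 2 = shb 0"
      using 1 by (simp_all add: Tr_def shb_def)
    moreover have "{VV m, VC 0} \<in> (treeE k :: 'a mvert set set)" using 1 unfolding treeE_def by simp
    ultimately show ?thesis using k by (intro disjI2 exI[of _ 0]) simp
  next
    case 2
    then have h: "Suc m < k - 2" "m + 1 \<noteq> k - 3" using m ek by (auto, presburger)
    have "Tr k s (VV m) = (VV (m+1) :: 'a mvert)" "Tr k s (VV (m+1)) = (VV m :: 'a mvert)"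
      using 2 h by (simp_all add: Tr_def)
    moreover have "{VV m, VV (m+1)} \<in> (treeE k :: 'a mvert set set)" using h unfolding treeE_def by auto
    ultimately show ?thesis using h by (intro disjI1 exI[of _ "m+1"]) simp
  next
    case 3
    then have h: "m \<ge> 1" "m - 1 \<noteq> k - 3" "even (m - 1)" using m by (auto, presburger+)
    have "Tr k s (VV m) = (VV (m-1) :: 'a mvert)" "Tr k s (VV (m-1)) = (VV m :: 'a mvert)"
      using 3 h by (simp_all add: Tr_def)
    moreover have "{VV (m-1), VV m} \<in> (treeE k :: 'a mvert set set)" using h m unfolding treeE_def
      by (intro UnI1 UnI2 CollectI exI[of _ "m-1"]) simp
    moreover have "m - 1 < k - 2" "m - 1 \<noteq> m" using h m by auto
    ultimately show ?thesis by (intro disjI1 exI[of _ "m-1"]) (simp add: insert_commute)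
  next
    case 4
    have "Tr k s (VV m) = (VC 1 :: 'a mvert)" "Tr k s (VC 1) = (VV m :: 'a mvert)" "s div 2 = shb 1"
      using 4 by (simp_all add: Tr_def shb_def)
    moreover have "{VV m, VC 1} \<in> (treeE k :: 'a mvert set set)" using 4 unfolding treeE_def by (simp add: insert_commute)
    ultimately show ?thesis using k by (intro disjI2 exI[of _ 1]) simp
  next
    case 5
    then have h: "Suc m < k - 2" using m ek by presburger
    have "Tr k s (VV m) = (VV (m+1) :: 'a mvert)" "Tr k s (VV (m+1)) = (VV m :: 'a mvert)"
      using 5 h by (simp_all add: Tr_def)
    moreover have "{VV m, VV (m+1)} \<in> (treeE k :: 'a mvert set set)" using h unfolding treeE_def by auto
    ultimately show ?thesis using h by (intro disjI1 exI[of _ "m+1"]) simp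
  next
    case 6
    then have h: "m \<ge> 1" "odd (m - 1)" using m by (simp, presburger)
    have "Tr k s (VV m) = (VV (m-1) :: 'a mvert)" "Tr k s (VV (m-1)) = (VV m :: 'a mvert)"
      using 6 h by (auto simp add: Tr_def)
    moreover have "{VV (m-1), VV m} \<in> (treeE k :: 'a mvert set set)" using h m unfolding treeE_def
      by (intro UnI1 UnI2 CollectI exI[of _ "m-1"]) simp
    moreover have "m - 1 < k - 2" "m - 1 \<noteq> m" using h m by auto
    ultimately show ?thesis by (intro disjI1 exI[of _ "m-1"]) (simp add: insert_commute)
  next
    case 7
    have "Tr k s (VV m) = (VC (m+2) :: 'a mvert)" "Tr k s (VC (m+2)) = (VV m :: 'a mvert)" "s div 2 = shb (m+2)"
      using 7 by (simp_all add: Tr_def shb_def)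
    moreover have "{VV m, VC (m+2)} \<in> (treeE k :: 'a mvert set set)" using m unfolding treeE_def
      by (intro UnI2 CollectI exI[of _ "m+2"]) (simp add: insert_commute)
    ultimately show ?thesis using m by (intro disjI2 exI[of _ "m+2"]) simp
  qed
qed

lemma tree_VC:
  assumes k: "odd k" "3 \<le> k" and j: "j < k" and s: "s < (6::nat)" and sh: "s div 2 = shb j"
  shows "\<exists>m. Tr k s (VC j) = (VV m :: 'a mvert) \<and> m < k - 2 \<and> Tr k s (VV m) = (VC j :: 'a mvert)
     \<and> {VC j, VV m} \<in> (treeE k :: 'a mvert set set)"
proof -
  consider "j = 0" | "j = 1" | "j \<ge> 2" by linarith
  then show ?thesis
  proof cases
    case 1
    have "Tr k s (VC j) = (VV (k-3) :: 'a mvert)" "Tr k s (VV (k-3)) = (VC j :: 'a mvert)"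
      using 1 sh by (simp_all add: Tr_def shb_def)
    moreover have "{VC j, VV (k-3)} \<in> (treeE k :: 'a mvert set set)" using 1 unfolding treeE_def by (simp add: insert_commute)
    ultimately show ?thesis using k by (intro exI[of _ "k-3"]) simp
  next
    case 2
    have "Tr k s (VC j) = (VV 0 :: 'a mvert)" "Tr k s (VV 0) = (VC j :: 'a mvert)"
      using 2 sh by (simp_all add: Tr_def shb_def)
    moreover have "{VC j, VV 0} \<in> (treeE k :: 'a mvert set set)" using 2 unfolding treeE_def by simp
    ultimately show ?thesis using k by (intro exI[of _ 0]) simp
  next
    case 3
    have "Tr k s (VC j) = (VV (j-2) :: 'a mvert)" "Tr k s (VV (j-2)) = (VC j :: 'a mvert)"
      using 3 sh by (simp_all add: Tr_def shb_def)
    moreover have "{VC j, VV (j-2)} \<in> (treeE k :: 'a mvert set set)" using 3 j unfolding treeE_def by auto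
    ultimately show ?thesis using j 3 by (intro exI[of _ "j-2"]) simp
  qed
qed



lemma prvl:
  fixes k j :: nat
  assumes "j < k" "3 \<le> k"
  defines "p \<equiv> (j + k - 1) mod k"
  shows "p < k" "(p + 1) mod k = j" "((j + 1) mod k + k - 1) mod k = j" "(j + 1) mod k < k"
    "(j + 1) mod k \<noteq> j" "p \<noteq> j"
proof -
  have k0: "k > 0" using assms by simp
  show "p < k" unfolding p_def using k0 by simp
  have pj: "p = (if j = 0 then k - 1 else j - 1)"
  proof (cases "j = 0")
    case True then show ?thesis unfolding p_def using k0 by simp
  next
    case False
    then obtain i where i: "j = Suc i" by (cases j) auto
    have "p = (i + k) mod k" unfolding p_def i by simp
    then show ?thesis using assms i by simp
  qed
  have nj: "(j + 1) mod k = (if j + 1 = k then 0 else j + 1)" using assms by simp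
  show "(p + 1) mod k = j" using pj assms k0 by auto
  show "((j + 1) mod k + k - 1) mod k = j" using nj assms k0 by auto
  show "(j + 1) mod k < k" using k0 by simp
  show "(j + 1) mod k \<noteq> j" using nj assms by auto
  show "p \<noteq> j" using pj assms by auto
qed

locale asm =
  fixes k :: nat and V :: "nat \<Rightarrow> 'a set" and E :: "nat \<Rightarrow> 'a set set"
    and x y x0 x1 y0 y1 :: "nat \<Rightarrow> 'a" and Q :: "nat \<Rightarrow> nat \<Rightarrow> 'a \<Rightarrow> 'a"
  assumes kodd: "odd k" and k3: "3 \<le> k"
  and cmp: "\<And>j. j < k \<Longrightarrow> compx (V j) (E j) (x j) (y j) (x0 j) (x1 j) (y0 j) (y1 j) (Q j)"
  and C1: "\<And>j s. j < k \<Longrightarrow> s < 6 \<Longrightarrow>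
     \<not> (Q j s (y j) = x j \<and> Q ((j+1) mod k) s (x ((j+1) mod k)) = y ((j+1) mod k))"
  and C2a: "\<And>j s. j < k \<Longrightarrow> s < 6 \<Longrightarrow>
     \<not> (Q j s (y j) = y0 j \<and> Q ((j+1) mod k) s (x ((j+1) mod k)) = x0 ((j+1) mod k))"
  and C2b: "\<And>j s. j < k \<Longrightarrow> s < 6 \<Longrightarrow>
     \<not> (Q j s (y j) = y1 j \<and> Q ((j+1) mod k) s (x ((j+1) mod k)) = x1 ((j+1) mod k))"
  and C3: "\<And>j s. j < k \<Longrightarrow> s < 6 \<Longrightarrow>
     (Q j s (y j) \<noteq> x j \<and> Q ((j+1) mod k) s (x ((j+1) mod k)) \<noteq> y ((j+1) mod k)) = (s div 2 = shb j)"
begin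

definition prv :: "nat \<Rightarrow> nat" where "prv j = (j + k - 1) mod k"

lemma prv:
  assumes "j < k"
  shows "prv j < k" "(prv j + 1) mod k = j" "prv ((j + 1) mod k) = j" "(j + 1) mod k < k"
    "(j + 1) mod k \<noteq> j" "prv j \<noteq> j"
  using prvl[OF assms k3] unfolding prv_def by auto

definition fa :: "nat \<Rightarrow> nat \<Rightarrow> bool" where
  "fa j s = (Q j s (y j) \<noteq> y0 j \<and> Q ((j+1) mod k) s (x ((j+1) mod k)) \<noteq> x0 ((j+1) mod k))"
definition fb :: "nat \<Rightarrow> nat \<Rightarrow> bool" where
  "fb j s = (Q j s (y j) \<noteq> y1 j \<and> Q ((j+1) mod k) s (x ((j+1) mod k)) \<noteq> x1 ((j+1) mod k))"

definition P :: "nat \<Rightarrow> 'a mvert \<Rightarrow> 'a mvert" where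
  "P s v = (case v of
     Old j u \<Rightarrow> (if Q j s u = x j then (if u = x0 j then VA (prv j) else VB (prv j))
                else if Q j s u = y j then (if u = y0 j then VA j else VB j) else Old j (Q j s u))
   | VA j \<Rightarrow> (if Q j s (y j) = y0 j then Old j (y0 j)
             else if Q ((j+1) mod k) s (x ((j+1) mod k)) = x0 ((j+1) mod k)
             then Old ((j+1) mod k) (x0 ((j+1) mod k)) else VC j)
   | VB j \<Rightarrow> (if Q j s (y j) = y1 j then Old j (y1 j)
             else if Q ((j+1) mod k) s (x ((j+1) mod k)) = x1 ((j+1) mod k)
             then Old ((j+1) mod k) (x1 ((j+1) mod k)) else VC j)
   | VC j \<Rightarrow> (if fa j s then VA j else if fb j s then VB j else Tr k s (VC j))
   | VV m \<Rightarrow> Tr k s (VV m))"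

lemma P_simps:
  "P s (Old j u) = (if Q j s u = x j then (if u = x0 j then VA (prv j) else VB (prv j))
                else if Q j s u = y j then (if u = y0 j then VA j else VB j) else Old j (Q j s u))"
  "P s (VA j) = (if Q j s (y j) = y0 j then Old j (y0 j)
             else if Q ((j+1) mod k) s (x ((j+1) mod k)) = x0 ((j+1) mod k)
             then Old ((j+1) mod k) (x0 ((j+1) mod k)) else VC j)"
  "P s (VB j) = (if Q j s (y j) = y1 j then Old j (y1 j)
             else if Q ((j+1) mod k) s (x ((j+1) mod k)) = x1 ((j+1) mod k)
             then Old ((j+1) mod k) (x1 ((j+1) mod k)) else VC j)"
  "P s (VC j) = (if fa j s then VA j else if fb j s then VB j else Tr k s (VC j))"
  "P s (VV m) = Tr k s (VV m)"
  unfolding P_def by simp_all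

abbreviation "V' \<equiv> M_vertices k V x y"
abbreviation "E' \<equiv> M_edges k E x y x0 x1 y0 y1"

lemma MV_simps:
  "Old i u \<in> V' \<longleftrightarrow> i < k \<and> u \<in> V i \<and> u \<noteq> x i \<and> u \<noteq> y i"
  "VA j \<in> V' \<longleftrightarrow> j < k" "VB j \<in> V' \<longleftrightarrow> j < k" "VC j \<in> V' \<longleftrightarrow> j < k"
  "VV m \<in> V' \<longleftrightarrow> m < k - 2"
  unfolding M_vertices_def by auto

lemma E'_intro:
  "i < k \<Longrightarrow> {u, w} \<in> E i \<Longrightarrow> u \<notin> {x i, y i} \<Longrightarrow> w \<notin> {x i, y i} \<Longrightarrow> {Old i u, Old i w} \<in> E'"
  "j < k \<Longrightarrow> {VA j, Old j (y0 j)} \<in> E'"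
  "j < k \<Longrightarrow> {VA j, Old ((j + 1) mod k) (x0 ((j + 1) mod k))} \<in> E'"
  "j < k \<Longrightarrow> {VB j, Old j (y1 j)} \<in> E'"
  "j < k \<Longrightarrow> {VB j, Old ((j + 1) mod k) (x1 ((j + 1) mod k))} \<in> E'"
  "j < k \<Longrightarrow> {VA j, VC j} \<in> E'"
  "j < k \<Longrightarrow> {VB j, VC j} \<in> E'"
  "e \<in> treeE k \<Longrightarrow> e \<in> E'"
proof -
  show "i < k \<Longrightarrow> {u, w} \<in> E i \<Longrightarrow> u \<notin> {x i, y i} \<Longrightarrow> w \<notin> {x i, y i} \<Longrightarrow> {Old i u, Old i w} \<in> E'"
    unfolding M_edges_def by (rule UnI1, rule UnI1, rule UnI1, rule CollectI, rule exI[of _ i], rule exI[of _ u], rule exI[of _ w]) simp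
  show "j < k \<Longrightarrow> {VA j, Old j (y0 j)} \<in> E'"
    "j < k \<Longrightarrow> {VA j, Old ((j + 1) mod k) (x0 ((j + 1) mod k))} \<in> E'"
    "j < k \<Longrightarrow> {VB j, Old j (y1 j)} \<in> E'"
    "j < k \<Longrightarrow> {VB j, Old ((j + 1) mod k) (x1 ((j + 1) mod k))} \<in> E'"
    "j < k \<Longrightarrow> {VA j, VC j} \<in> E'"
    "j < k \<Longrightarrow> {VB j, VC j} \<in> E'"
    unfolding M_edges_def by (rule UnI1, rule UnI1, rule UnI2, rule UN_I[of j], simp, simp)+
  assume e: "e \<in> treeE k"
  have "e \<in> path_edges ([VC 1] @ map VV [0..<k - 2] @ [VC 0]) \<union> {{VC i, VV (i - 2)} | i. 2 \<le> i \<and> i < k}"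
    using path_tree[OF k3, where 'a='a] e by simp
  then show "e \<in> E'"
  proof
    assume "e \<in> path_edges ([VC 1] @ map VV [0..<k - 2] @ [VC 0])"
    then show ?thesis unfolding M_edges_def by (intro UnI1 UnI2)
  next
    assume "e \<in> {{VC i, VV (i - 2)} | i. 2 \<le> i \<and> i < k}"
    then show ?thesis unfolding M_edges_def by (intro UnI2)
  qed
qed

lemma E'_cases:
  assumes "e \<in> E'"
  shows "(\<exists>i u w. e = {Old i u, Old i w} \<and> i < k \<and> {u, w} \<in> E i \<and> u \<notin> {x i, y i} \<and> w \<notin> {x i, y i})
    \<or> (\<exists>j<k. e = {VA j, Old j (y0 j)} \<or> e = {VA j, Old ((j + 1) mod k) (x0 ((j + 1) mod k))}
           \<or> e = {VB j, Old j (y1 j)} \<or> e = {VB j, Old ((j + 1) mod k) (x1 ((j + 1) mod k))}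
           \<or> e = {VA j, VC j} \<or> e = {VB j, VC j})
    \<or> e \<in> treeE k"
proof -
  have T: "path_edges ([VC 1] @ map VV [0..<k - 2] @ [VC 0]) \<union> {{VC i, VV (i - 2)} | i. 2 \<le> i \<and> i < k}
     = (treeE k :: 'a mvert set set)" by (rule path_tree[OF k3])
  from assms show ?thesis unfolding M_edges_def
  proof (elim UnE)
    assume "e \<in> {{Old i u, Old i w} |i u w. i < k \<and> {u, w} \<in> E i \<and> u \<notin> {x i, y i} \<and> w \<notin> {x i, y i}}"
    then show ?thesis by (intro disjI1) blast
  next
    assume "e \<in> (\<Union>j<k. {{VA j, Old j (y0 j)}, {VA j, Old ((j + 1) mod k) (x0 ((j + 1) mod k))},
                 {VB j, Old j (y1 j)}, {VB j, Old ((j + 1) mod k) (x1 ((j + 1) mod k))},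
                 {VA j, VC j}, {VB j, VC j}})"
    then obtain j where "j < k" "e \<in> {{VA j, Old j (y0 j)}, {VA j, Old ((j + 1) mod k) (x0 ((j + 1) mod k))},
                 {VB j, Old j (y1 j)}, {VB j, Old ((j + 1) mod k) (x1 ((j + 1) mod k))},
                 {VA j, VC j}, {VB j, VC j}}" by (rule UN_E) (simp only: lessThan_iff)
    then show ?thesis by (intro disjI2 disjI1 exI[of _ j]) simp
  next
    assume "e \<in> path_edges ([VC 1] @ map VV [0..<k - 2] @ [VC 0])"
    then have "e \<in> treeE k" unfolding T[symmetric] by (rule UnI1)
    then show ?thesis by (rule disjI2[OF disjI2])
  next
    assume "e \<in> {{VC i, VV (i - 2)} | i. 2 \<le> i \<and> i < k}"
    then have "e \<in> treeE k" unfolding T[symmetric] by (rule UnI2)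
    then show ?thesis by (rule disjI2[OF disjI2])
  qed
qed

end


context asm
begin

lemma Qfacts:
  assumes j: "j < k" and s: "s < 6"
  shows "Q j s (x j) \<in> {y j, x0 j, x1 j}" "Q j s (y j) \<in> {x j, y0 j, y1 j}"
    "(Q j s (x j) = y j) = (Q j s (y j) = x j)"
  using compx.qx[OF cmp[OF j] s] compx.qy[OF cmp[OF j] s] compx.qxy[OF cmp[OF j] s] by auto

lemma Qto_x:
  assumes j: "j < k" and s: "s < 6" and u: "u \<in> V j" "u \<noteq> y j" and q: "Q j s u = x j"
  shows "(u = x0 j \<or> u = x1 j) \<and> Q j s (x j) = u"
proof -
  have "Q j s (x j) = u" using compx.qinv[OF cmp[OF j] s u(1)] q by simp
  then show ?thesis using Qfacts(1)[OF j s] u by auto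
qed

lemma Qto_y:
  assumes j: "j < k" and s: "s < 6" and u: "u \<in> V j" "u \<noteq> x j" and q: "Q j s u = y j"
  shows "(u = y0 j \<or> u = y1 j) \<and> Q j s (y j) = u"
proof -
  have "Q j s (y j) = u" using compx.qinv[OF cmp[OF j] s u(1)] q by simp
  then show ?thesis using Qfacts(2)[OF j s] u by auto
qed

lemma nofree:
  assumes j: "j < k" and s: "s < 6"
  shows "(\<not> fa j s \<and> \<not> fb j s) = (s div 2 = shb j)" "\<not> (fa j s \<and> fb j s)"
proof -
  define j' where "j' = (j + 1) mod k"
  have j': "j' < k" unfolding j'_def using prv(4)[OF j] .
  define a where "a = Q j s (y j)"
  define b where "b = Q j' s (x j')"
  have ab: "a \<in> {x j, y0 j, y1 j}" "b \<in> {y j', x0 j', x1 j'}"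
    unfolding a_def b_def using Qfacts(2)[OF j s] Qfacts(1)[OF j' s] by auto
  note b1 = compx.basic[OF cmp[OF j]] and b2 = compx.basic[OF cmp[OF j']]
  have c1: "\<not> (a = x j \<and> b = y j')" and c2a: "\<not> (a = y0 j \<and> b = x0 j')"
    and c2b: "\<not> (a = y1 j \<and> b = x1 j')" and c3: "(a \<noteq> x j \<and> b \<noteq> y j') = (s div 2 = shb j)"
    using C1[OF j s] C2a[OF j s] C2b[OF j s] C3[OF j s] unfolding a_def b_def j'_def by auto
  have fa: "fa j s = (a \<noteq> y0 j \<and> b \<noteq> x0 j')" and fb: "fb j s = (a \<noteq> y1 j \<and> b \<noteq> x1 j')"
    unfolding fa_def fb_def a_def b_def j'_def by auto
  have "(\<not> fa j s \<and> \<not> fb j s) = (a \<noteq> x j \<and> b \<noteq> y j')"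
    unfolding fa fb using ab c2a c2b b1 b2 by auto
  then show "(\<not> fa j s \<and> \<not> fb j s) = (s div 2 = shb j)" using c3 by simp
  show "\<not> (fa j s \<and> fb j s)" unfolding fa fb using ab c1 by auto
qed

lemma vert_Old:
  assumes v: "Old j u \<in> V'" and s: "s < 6"
  shows "P s (Old j u) \<in> V' \<and> P s (Old j u) \<noteq> Old j u \<and> P s (P s (Old j u)) = Old j u
     \<and> {Old j u, P s (Old j u)} \<in> E'"
proof -
  have j: "j < k" and u: "u \<in> V j" "u \<noteq> x j" "u \<noteq> y j" using v by (auto simp: MV_simps)
  note b = compx.basic[OF cmp[OF j]]
  note pp = prv[OF j]
  define p where "p = prv j"
  have p: "p < k" "(p + 1) mod k = j" using pp unfolding p_def by auto
  consider (X0) "Q j s u = x j" "u = x0 j" | (X1) "Q j s u = x j" "u \<noteq> x0 j"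
    | (Y0) "Q j s u \<noteq> x j" "Q j s u = y j" "u = y0 j" | (Y1) "Q j s u \<noteq> x j" "Q j s u = y j" "u \<noteq> y0 j"
    | (O) "Q j s u \<noteq> x j" "Q j s u \<noteq> y j" by blast
  then show ?thesis
  proof cases
    case X0
    have hx: "Q j s (x j) = x0 j" using Qto_x[OF j s u(1) u(3) X0(1)] X0 by simp
    have nC: "Q p s (y p) \<noteq> y0 p" using C2a[OF p(1) s] p hx by auto
    have P1: "P s (Old j u) = VA p" unfolding P_simps p_def using X0 by simp
    have P2: "P s (VA p) = Old j u" unfolding P_simps using nC p hx X0 by simp
    have e: "{VA p, Old j u} \<in> E'" using E'_intro(3)[OF p(1)] p X0 by simp
    show ?thesis using P1 P2 e p by (simp add: MV_simps insert_commute)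
  next
    case X1
    have hx: "Q j s (x j) = x1 j" and ux: "u = x1 j" using Qto_x[OF j s u(1) u(3) X1(1)] X1 by auto
    have nC: "Q p s (y p) \<noteq> y1 p" using C2b[OF p(1) s] p hx by auto
    have P1: "P s (Old j u) = VB p" unfolding P_simps p_def using X1 by simp
    have P2: "P s (VB p) = Old j u" unfolding P_simps using nC p hx ux by simp
    have e: "{VB p, Old j u} \<in> E'" using E'_intro(5)[OF p(1)] p ux by simp
    show ?thesis using P1 P2 e p by (simp add: MV_simps insert_commute)
  next
    case Y0
    have hy: "Q j s (y j) = y0 j" using Qto_y[OF j s u(1) u(2) Y0(2)] Y0 by simp
    have P1: "P s (Old j u) = VA j" unfolding P_simps using Y0 by simp
    have P2: "P s (VA j) = Old j u" unfolding P_simps using hy Y0 by simp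
    have e: "{VA j, Old j u} \<in> E'" using E'_intro(2)[OF j] Y0 by simp
    show ?thesis using P1 P2 e j by (simp add: MV_simps insert_commute)
  next
    case Y1
    have hy: "Q j s (y j) = y1 j" and uy: "u = y1 j" using Qto_y[OF j s u(1) u(2) Y1(2)] Y1 by auto
    have P1: "P s (Old j u) = VB j" unfolding P_simps using Y1 by simp
    have P2: "P s (VB j) = Old j u" unfolding P_simps using hy uy by simp
    have e: "{VB j, Old j u} \<in> E'" using E'_intro(4)[OF j] uy by simp
    show ?thesis using P1 P2 e j by (simp add: MV_simps insert_commute)
  next
    case O
    define w where "w = Q j s u"
    have w: "w \<in> V j" "w \<noteq> u" "Q j s w = u" "{u, w} \<in> E j"
      unfolding w_def using compx.qV[OF cmp[OF j] s u(1)] compx.qne[OF cmp[OF j] s u(1)]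
        compx.qinv[OF cmp[OF j] s u(1)] compx.qE[OF cmp[OF j] s u(1)] by auto
    have P1: "P s (Old j u) = Old j w" unfolding P_simps w_def using O by simp
    have P2: "P s (Old j w) = Old j u" unfolding P_simps using w u by simp
    have e: "{Old j u, Old j w} \<in> E'" using E'_intro(1)[OF j w(4)] u O unfolding w_def by simp
    show ?thesis using P1 P2 e j w O u unfolding w_def by (simp add: MV_simps)
  qed
qed

end


context asm
begin

lemma vert_VA:
  assumes j: "j < k" and s: "s < 6"
  shows "P s (VA j) \<in> V' \<and> P s (VA j) \<noteq> VA j \<and> P s (P s (VA j)) = VA j \<and> {VA j, P s (VA j)} \<in> E'"
proof -
  define j' where "j' = (j + 1) mod k"
  have j': "j' < k" "prv j' = j" "j' \<noteq> j" using prv[OF j] unfolding j'_def by auto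
  note b = compx.basic[OF cmp[OF j]] and b' = compx.basic[OF cmp[OF j'(1)]]
  consider (A) "Q j s (y j) = y0 j" | (B) "Q j s (y j) \<noteq> y0 j" "Q j' s (x j') = x0 j'"
    | (C) "Q j s (y j) \<noteq> y0 j" "Q j' s (x j') \<noteq> x0 j'" by blast
  then show ?thesis
  proof cases
    case A
    have q: "Q j s (y0 j) = y j" using compx.qinv[OF cmp[OF j] s b(2)] A by simp
    have P1: "P s (VA j) = Old j (y0 j)" unfolding P_simps using A by simp
    have P2: "P s (Old j (y0 j)) = VA j" unfolding P_simps using q b by simp
    show ?thesis using P1 P2 E'_intro(2)[OF j] j b by (simp add: MV_simps)
  next
    case B
    have q: "Q j' s (x0 j') = x j'" using compx.qinv[OF cmp[OF j'(1)] s b'(1)] B by simp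
    have P1: "P s (VA j) = Old j' (x0 j')" unfolding P_simps j'_def[symmetric] using B by simp
    have P2: "P s (Old j' (x0 j')) = VA j" unfolding P_simps using q j' by simp
    show ?thesis using P1 P2 E'_intro(3)[OF j] j'(1) b' unfolding j'_def[symmetric] by (simp add: MV_simps)
  next
    case C
    have f: "fa j s" unfolding fa_def j'_def[symmetric] using C by simp
    have P1: "P s (VA j) = VC j" unfolding P_simps j'_def[symmetric] using C by simp
    have P2: "P s (VC j) = VA j" unfolding P_simps using f by simp
    show ?thesis using P1 P2 E'_intro(6)[OF j] j by (simp add: MV_simps)
  qed
qed

lemma vert_VB:
  assumes j: "j < k" and s: "s < 6"
  shows "P s (VB j) \<in> V' \<and> P s (VB j) \<noteq> VB j \<and> P s (P s (VB j)) = VB j \<and> {VB j, P s (VB j)} \<in> E'"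
proof -
  define j' where "j' = (j + 1) mod k"
  have j': "j' < k" "prv j' = j" "j' \<noteq> j" using prv[OF j] unfolding j'_def by auto
  note b = compx.basic[OF cmp[OF j]] and b' = compx.basic[OF cmp[OF j'(1)]]
  consider (A) "Q j s (y j) = y1 j" | (B) "Q j s (y j) \<noteq> y1 j" "Q j' s (x j') = x1 j'"
    | (C) "Q j s (y j) \<noteq> y1 j" "Q j' s (x j') \<noteq> x1 j'" by blast
  then show ?thesis
  proof cases
    case A
    have q: "Q j s (y1 j) = y j" using compx.qinv[OF cmp[OF j] s b(2)] A by simp
    have P1: "P s (VB j) = Old j (y1 j)" unfolding P_simps using A by simp
    have P2: "P s (Old j (y1 j)) = VB j" unfolding P_simps using q b by simp
    show ?thesis using P1 P2 E'_intro(4)[OF j] j b by (simp add: MV_simps)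
  next
    case B
    have q: "Q j' s (x1 j') = x j'" using compx.qinv[OF cmp[OF j'(1)] s b'(1)] B by simp
    have P1: "P s (VB j) = Old j' (x1 j')" unfolding P_simps j'_def[symmetric] using B by simp
    have P2: "P s (Old j' (x1 j')) = VB j" unfolding P_simps using q j' b' by simp
    show ?thesis using P1 P2 E'_intro(5)[OF j] j'(1) b' unfolding j'_def[symmetric] by (simp add: MV_simps)
  next
    case C
    have f: "fb j s" unfolding fb_def j'_def[symmetric] using C by simp
    have nf: "\<not> fa j s" using nofree(2)[OF j s] f by blast
    have P1: "P s (VB j) = VC j" unfolding P_simps j'_def[symmetric] using C by simp
    have P2: "P s (VC j) = VB j" unfolding P_simps using f nf by simp
    show ?thesis using P1 P2 E'_intro(7)[OF j] j by (simp add: MV_simps)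
  qed
qed

lemma vert_VC:
  assumes j: "j < k" and s: "s < 6"
  shows "P s (VC j) \<in> V' \<and> P s (VC j) \<noteq> VC j \<and> P s (P s (VC j)) = VC j \<and> {VC j, P s (VC j)} \<in> E'"
proof -
  define j' where "j' = (j + 1) mod k"
  consider (A) "fa j s" | (B) "\<not> fa j s" "fb j s" | (C) "\<not> fa j s" "\<not> fb j s" by blast
  then show ?thesis
  proof cases
    case A
    have P1: "P s (VC j) = VA j" unfolding P_simps using A by simp
    have P2: "P s (VA j) = VC j" unfolding P_simps using A unfolding fa_def by simp
    have e: "{VC j, VA j} \<in> E'" using E'_intro(6)[OF j] by (simp add: insert_commute)
    show ?thesis using P1 P2 e j by (simp add: MV_simps)
  next
    case B
    have P1: "P s (VC j) = VB j" unfolding P_simps using B by simp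
    have P2: "P s (VB j) = VC j" unfolding P_simps using B unfolding fb_def by simp
    have e: "{VC j, VB j} \<in> E'" using E'_intro(7)[OF j] by (simp add: insert_commute)
    show ?thesis using P1 P2 e j by (simp add: MV_simps)
  next
    case C
    have sh: "s div 2 = shb j" using nofree(1)[OF j s] C by simp
    obtain m where m: "Tr k s (VC j) = (VV m :: 'a mvert)" "m < k - 2" "Tr k s (VV m) = (VC j :: 'a mvert)"
      "{VC j, VV m} \<in> (treeE k :: 'a mvert set set)"
      using tree_VC[OF kodd k3 j s sh, where 'a='a] by blast
    have P1: "P s (VC j) = VV m" unfolding P_simps using C m by simp
    have P2: "P s (VV m) = VC j" unfolding P_simps using m by simp
    show ?thesis using P1 P2 E'_intro(8)[OF m(4)] m by (simp add: MV_simps)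
  qed
qed

lemma vert_VV:
  assumes m: "m < k - 2" and s: "s < 6"
  shows "P s (VV m) \<in> V' \<and> P s (VV m) \<noteq> VV m \<and> P s (P s (VV m)) = VV m \<and> {VV m, P s (VV m)} \<in> E'"
proof -
  from tree_VV[OF kodd k3 m s, where 'a='a]
  show ?thesis
  proof (elim disjE exE conjE)
    fix m' assume h: "Tr k s (VV m) = (VV m' :: 'a mvert)" "m' < k - 2" "m' \<noteq> m" "Tr k s (VV m') = (VV m :: 'a mvert)"
      "{VV m, VV m'} \<in> (treeE k :: 'a mvert set set)"
    show ?thesis using h E'_intro(8)[OF h(5)] by (simp add: P_simps MV_simps)
  next
    fix j assume h: "Tr k s (VV m) = (VC j :: 'a mvert)" "j < k" "s div 2 = shb j" "Tr k s (VC j) = (VV m :: 'a mvert)"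
      "{VV m, VC j} \<in> (treeE k :: 'a mvert set set)"
    have C: "\<not> fa j s" "\<not> fb j s" using nofree(1)[OF h(2) s] h(3) by auto
    show ?thesis using h E'_intro(8)[OF h(5)] C by (simp add: P_simps MV_simps)
  qed
qed

lemma vert_all:
  assumes v: "v \<in> V'" and s: "s < 6"
  shows "P s v \<in> V' \<and> P s v \<noteq> v \<and> P s (P s v) = v \<and> {v, P s v} \<in> E'"
proof (cases v)
  case (Old j u) then show ?thesis using vert_Old v s by simp
next
  case (VA j) then show ?thesis using vert_VA v s by (simp add: MV_simps)
next
  case (VB j) then show ?thesis using vert_VB v s by (simp add: MV_simps)
next
  case (VC j) then show ?thesis using vert_VC v s by (simp add: MV_simps)
next
  case (VV m) then show ?thesis using vert_VV v s by (simp add: MV_simps)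
qed

end


lemma card_block: "c < 3 \<Longrightarrow> card {s::nat. s < 6 \<and> s div 2 = c} = 2"
proof -
  assume c: "c < 3"
  have "{s::nat. s < 6 \<and> s div 2 = c} = {2*c, 2*c+1}" using c by auto
  then show ?thesis by simp
qed

lemma card_neither:
  assumes "card {s::nat. s < 6 \<and> A s} = 2" "card {s. s < 6 \<and> B s} = 2" "\<And>s. s < 6 \<Longrightarrow> \<not> (A s \<and> B s)"
  shows "card {s. s < 6 \<and> \<not> A s \<and> \<not> B s} = 2"
proof -
  have u: "{s. s < 6 \<and> (A s \<or> B s)} = {s. s < 6 \<and> A s} \<union> {s. s < 6 \<and> B s}" by auto
  have "card ({s. s < 6 \<and> A s} \<union> {s. s < 6 \<and> B s}) = 4"
    using assms by (subst card_Un_disjoint) auto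
  then have "card {s. s < 6 \<and> (A s \<or> B s)} = 4" using u by simp
  then show ?thesis using card_split6[of 6 "\<lambda>s. A s \<or> B s"] by simp
qed

context asm
begin

definition Mset :: "nat \<Rightarrow> 'a mvert set set" where
  "Mset s = (\<lambda>v. {v, P s v}) ` V'"

lemma pmM: "s < 6 \<Longrightarrow> perfect_matching V' E' (Mset s)"
  unfolding Mset_def by (rule partner_pm(1)) (use vert_all in blast)

lemma memM: "s < 6 \<Longrightarrow> a \<in> V' \<Longrightarrow> ({a, b} \<in> Mset s) = (P s a = b)"
  unfolding Mset_def by (rule partner_pm(2)) (use vert_all in blast)+

lemma count_reduce:
  assumes "a \<in> V'" and "\<And>s. s < 6 \<Longrightarrow> (P s a = b) = R s" and "card {s. s < 6 \<and> R s} = 2"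
  shows "card {i. i < 6 \<and> {a, b} \<in> Mset i} = 2"
proof -
  have "{i. i < 6 \<and> {a, b} \<in> Mset i} = {s. s < 6 \<and> R s}" using memM assms(1,2) by auto
  then show ?thesis using assms(3) by simp
qed

lemma qc': "j < k \<Longrightarrow> {u, w} \<in> E j \<Longrightarrow> card {s. s < 6 \<and> Q j s u = w} = 2"
  using compx.qc[OF cmp] by blast

lemma PVC:
  assumes j: "j < k" and s: "s < 6"
  shows "(P s (VC j) = VV m) = (s div 2 = shb j \<and> Tr k s (VC j) = (VV m :: 'a mvert))"
  using nofree[OF j s] unfolding P_simps by auto

lemma count_fa: "j < k \<Longrightarrow> card {s. s < 6 \<and> fa j s} = 2"
proof -
  assume j: "j < k"
  define j' where "j' = (j + 1) mod k"
  have j': "j' < k" using prv[OF j] unfolding j'_def by auto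
  note b = compx.basic[OF cmp[OF j]] and b' = compx.basic[OF cmp[OF j']]
  have e1: "{y j, y0 j} \<in> E j" and e2: "{x j', x0 j'} \<in> E j'"
    using compx.vc[OF cmp[OF j]] compx.vc[OF cmp[OF j']] unfolding valid_choice_def by auto
  have "card {s. s < 6 \<and> \<not> (Q j s (y j) = y0 j) \<and> \<not> (Q j' s (x j') = x0 j')} = 2"
    by (rule card_neither[OF qc'[OF j e1] qc'[OF j' e2]]) (use C2a[OF j] in \<open>auto simp: j'_def\<close>)
  then show ?thesis unfolding fa_def j'_def by simp
qed

lemma count_fb: "j < k \<Longrightarrow> card {s. s < 6 \<and> fb j s} = 2"
proof -
  assume j: "j < k"
  define j' where "j' = (j + 1) mod k"
  have j': "j' < k" using prv[OF j] unfolding j'_def by auto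
  have e1: "{y j, y1 j} \<in> E j" and e2: "{x j', x1 j'} \<in> E j'"
    using compx.vc[OF cmp[OF j]] compx.vc[OF cmp[OF j']] unfolding valid_choice_def by auto
  have "card {s. s < 6 \<and> \<not> (Q j s (y j) = y1 j) \<and> \<not> (Q j' s (x j') = x1 j')} = 2"
    by (rule card_neither[OF qc'[OF j e1] qc'[OF j' e2]]) (use C2b[OF j] in \<open>auto simp: j'_def\<close>)
  then show ?thesis unfolding fb_def j'_def by simp
qed

end


context asm
begin

lemma count_edge:
  assumes e: "e \<in> E'"
  shows "card {i. i < 6 \<and> e \<in> Mset i} = 2"
proof -
  consider (O) i u w where "e = {Old i u, Old i w}" "i < k" "{u, w} \<in> E i" "u \<notin> {x i, y i}" "w \<notin> {x i, y i}"
    | (G) j where "j < k" "e = {VA j, Old j (y0 j)} \<or> e = {VA j, Old ((j + 1) mod k) (x0 ((j + 1) mod k))}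
           \<or> e = {VB j, Old j (y1 j)} \<or> e = {VB j, Old ((j + 1) mod k) (x1 ((j + 1) mod k))}
           \<or> e = {VA j, VC j} \<or> e = {VB j, VC j}"
    | (T) "e \<in> treeE k"
    using E'_cases[OF e] by blast
  then show ?thesis
  proof cases
  case O
  note h = O
  have uV: "u \<in> V i" using graph_edge_ne[OF compx.gr[OF cmp[OF h(2)]] h(3)] by simp
  have a: "Old i u \<in> V'" using uV h by (simp add: MV_simps)
  have R: "(P s (Old i u) = Old i w) = (Q i s u = w)" for s using h(4,5) by (auto simp: P_simps)
  show ?thesis unfolding h(1) by (rule count_reduce[OF a R qc'[OF h(2,3)]])
next
  case G
  note j = G(1)
  define j' where "j' = (j + 1) mod k"
  have j': "j' < k" "prv j' = j" "j' \<noteq> j" "prv j \<noteq> j" using prv[OF j] unfolding j'_def by auto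
  note b = compx.basic[OF cmp[OF j]] and b' = compx.basic[OF cmp[OF j'(1)]]
  have vc: "{y j, y0 j} \<in> E j" "{y j, y1 j} \<in> E j" "{x j', x0 j'} \<in> E j'" "{x j', x1 j'} \<in> E j'"
    using compx.vc[OF cmp[OF j]] compx.vc[OF cmp[OF j'(1)]] unfolding valid_choice_def by auto
  have vc2: "{y0 j, y j} \<in> E j" "{y1 j, y j} \<in> E j" "{x0 j', x j'} \<in> E j'" "{x1 j', x j'} \<in> E j'"
    using vc by (simp_all add: insert_commute)
  from G(2) show ?thesis
  proof (elim disjE)
    assume "e = {VA j, Old j (y0 j)}"
    then have e: "e = {Old j (y0 j), VA j}" by (simp add: insert_commute)
    have a: "Old j (y0 j) \<in> V'" using j b by (simp add: MV_simps)
    have R: "(P s (Old j (y0 j)) = VA j) = (Q j s (y0 j) = y j)" for s using b j' by (auto simp: P_simps)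
    show ?thesis unfolding e by (rule count_reduce[OF a R qc'[OF j vc2(1)]])
  next
    assume "e = {VB j, Old j (y1 j)}"
    then have e: "e = {Old j (y1 j), VB j}" by (simp add: insert_commute)
    have a: "Old j (y1 j) \<in> V'" using j b by (simp add: MV_simps)
    have R: "(P s (Old j (y1 j)) = VB j) = (Q j s (y1 j) = y j)" for s using b j' by (auto simp: P_simps)
    show ?thesis unfolding e by (rule count_reduce[OF a R qc'[OF j vc2(2)]])
  next
    assume "e = {VA j, Old ((j + 1) mod k) (x0 ((j + 1) mod k))}"
    then have e: "e = {Old j' (x0 j'), VA j}" unfolding j'_def by (simp add: insert_commute)
    have a: "Old j' (x0 j') \<in> V'" using j' b' by (simp add: MV_simps)
    have R: "(P s (Old j' (x0 j')) = VA j) = (Q j' s (x0 j') = x j')" for s using b' j' by (auto simp: P_simps)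
    show ?thesis unfolding e by (rule count_reduce[OF a R qc'[OF j'(1) vc2(3)]])
  next
    assume "e = {VB j, Old ((j + 1) mod k) (x1 ((j + 1) mod k))}"
    then have e: "e = {Old j' (x1 j'), VB j}" unfolding j'_def by (simp add: insert_commute)
    have a: "Old j' (x1 j') \<in> V'" using j' b' by (simp add: MV_simps)
    have R: "(P s (Old j' (x1 j')) = VB j) = (Q j' s (x1 j') = x j')" for s using b' j' by (auto simp: P_simps)
    show ?thesis unfolding e by (rule count_reduce[OF a R qc'[OF j'(1) vc2(4)]])
  next
    assume e: "e = {VA j, VC j}"
    have a: "VA j \<in> V'" using j by (simp add: MV_simps)
    have R: "(P s (VA j) = VC j) = fa j s" for s unfolding P_simps fa_def by auto
    show ?thesis unfolding e by (rule count_reduce[OF a R count_fa[OF j]])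
  next
    assume e: "e = {VB j, VC j}"
    have a: "VB j \<in> V'" using j by (simp add: MV_simps)
    have R: "(P s (VB j) = VC j) = fb j s" for s unfolding P_simps fb_def by auto
    show ?thesis unfolding e by (rule count_reduce[OF a R count_fb[OF j]])
  qed
next
  case T
  then consider (a) "e = {VC 1, VV 0}" | (b) "e = {VV (k - 3), VC 0}"
    | (c) m where "e = {VV m, VV (Suc m)}" "Suc m < k - 2"
    | (d) i where "e = {VC i, VV (i - 2)}" "2 \<le> i" "i < k"
    unfolding treeE_def by blast
  then show ?thesis
  proof cases
    case a
    have aV: "VC 1 \<in> V'" using k3 by (simp add: MV_simps)
    have R: "(P s (VC 1) = VV 0) = (s div 2 = 1)" if "s < 6" for s
      using PVC[of 1 s 0] k3 that by (auto simp: Tr_def shb_def)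
    show ?thesis unfolding a by (rule count_reduce[OF aV R card_block]) simp_all
  next
    case b
    then have e: "e = {VC 0, VV (k - 3)}" by (simp add: insert_commute)
    have aV: "VC 0 \<in> V'" using k3 by (simp add: MV_simps)
    have R: "(P s (VC 0) = VV (k - 3)) = (s div 2 = 0)" if "s < 6" for s
      using PVC[of 0 s "k - 3"] k3 that by (auto simp: Tr_def shb_def)
    show ?thesis unfolding e by (rule count_reduce[OF aV R card_block]) simp_all
  next
    case c
    have aV: "VV m \<in> V'" using c by (simp add: MV_simps)
    have ne: "m \<noteq> k - 3" using c by simp
    have R: "(P s (VV m) = VV (Suc m)) = (s div 2 = (if even m then 0 else 1))" if "s < 6" for s
    proof -
      have "s div 2 = 0 \<or> s div 2 = 1 \<or> s div 2 = 2" using that by linarith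
      then show ?thesis using ne by (auto simp: P_simps Tr_def)
    qed
    show ?thesis unfolding c(1) by (rule count_reduce[OF aV R card_block]) simp_all
  next
    case d
    have aV: "VC i \<in> V'" using d by (simp add: MV_simps)
    have R: "(P s (VC i) = VV (i - 2)) = (s div 2 = 2)" if "s < 6" for s
      using PVC[of i s "i - 2"] d that by (auto simp: Tr_def shb_def)
    show ?thesis unfolding d(1) by (rule count_reduce[OF aV R card_block]) simp_all
  qed
  qed
qed

lemma cover: "has_fulkerson_cover V' E'"
  unfolding has_fulkerson_cover_def using pmM count_edge by blast

end


definition bNf :: "nat \<Rightarrow> nat" where
  "bNf j = (if j = 0 then 1 else if j = 1 then 2 else if even j then 0 else 1)"

primrec chain :: "(nat \<Rightarrow> bool \<Rightarrow> bool) \<Rightarrow> nat \<Rightarrow> bool" where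
  "chain h 0 = False"
| "chain h (Suc n) = h (Suc n) (chain h n)"

lemma blocks:
  assumes k: "odd k" "3 \<le> k" and j: "j < k"
  defines "p \<equiv> (j + k - 1) mod k"
  shows "bNf j < 3" "bNf j \<noteq> bNf ((j+1) mod k)"
    "\<And>c. c < 3 \<Longrightarrow> (c \<noteq> bNf j \<and> c \<noteq> bNf ((j+1) mod k)) = (c = shb j)"
    "shb p < 3" "bNf j \<noteq> shb p"
    "j \<le> 2 \<Longrightarrow> shb j = 3 - bNf j - shb p"
    "3 \<le> j \<Longrightarrow> shb p = 2 \<and> p = j - 1"
    "j \<ge> 1 \<Longrightarrow> p = j - 1" "j = 0 \<Longrightarrow> p = k - 1"
proof -
  have pj: "p = (if j = 0 then k - 1 else j - 1)"
  proof (cases "j = 0")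
    case True then show ?thesis unfolding p_def using k by simp
  next
    case False
    then obtain i where i: "j = Suc i" by (cases j) auto
    have "p = (i + k) mod k" unfolding p_def i by simp
    then show ?thesis using j i by simp
  qed
  have nj: "(j + 1) mod k = (if j + 1 = k then 0 else j + 1)" using j by simp
  show "j \<ge> 1 \<Longrightarrow> p = j - 1" "j = 0 \<Longrightarrow> p = k - 1" using pj by auto
  show "bNf j < 3" unfolding bNf_def by auto
  show "shb p < 3" unfolding shb_def by auto
  show "3 \<le> j \<Longrightarrow> shb p = 2 \<and> p = j - 1" using pj unfolding shb_def by auto
  show "bNf j \<noteq> shb p"
  proof -
    consider "j = 0" | "j = 1" | "j = 2" | "j \<ge> 3" by linarith
    then show ?thesis using pj k unfolding shb_def bNf_def by cases auto
  qed
  show "j \<le> 2 \<Longrightarrow> shb j = 3 - bNf j - shb p"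
  proof -
    assume "j \<le> 2"
    then consider "j = 0" | "j = 1" | "j = 2" by linarith
    then show ?thesis using pj k unfolding shb_def bNf_def by cases auto
  qed
  have main: "bNf j \<noteq> bNf ((j+1) mod k) \<and> (\<forall>c<3. (c \<noteq> bNf j \<and> c \<noteq> bNf ((j+1) mod k)) = (c = shb j))"
  proof -
    consider "j = 0" | "j = 1" | "j \<ge> 2" "j + 1 = k" | "j \<ge> 2" "j + 1 \<noteq> k" by linarith
    then show ?thesis
    proof cases
      case 1 then show ?thesis using k nj unfolding shb_def bNf_def by auto
    next
      case 2 then show ?thesis using k nj unfolding shb_def bNf_def by auto
    next
      case 3
      then have "even j" using k by presburger
      then show ?thesis using 3 nj unfolding shb_def bNf_def by auto
    next
      case 4
      then have "bNf ((j+1) mod k) = (if even j then 1 else 0)" "bNf j = (if even j then 0 else 1)"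
        using nj unfolding bNf_def by auto
      then show ?thesis using 4 unfolding shb_def by auto
    qed
  qed
  then show "bNf j \<noteq> bNf ((j+1) mod k)" "\<And>c. c < 3 \<Longrightarrow> (c \<noteq> bNf j \<and> c \<noteq> bNf ((j+1) mod k)) = (c = shb j)"
    by auto
qed

context compx
begin
lemma comp_perm:
  assumes f: "bij_betw f {..<6} {..<6}"
  shows "compx V E x y x0 x1 y0 y1 (\<lambda>t. q (f t))"
proof -
  have ft: "t < 6 \<Longrightarrow> f t < 6" for t using f unfolding bij_betw_def by auto
  show ?thesis
  proof (unfold_locales)
    show "valid_choice V E x y x0 x1 y0 y1" by (rule vc)
    show "graph V E" by (rule gr)
  next
    fix w assume "{x, w} \<in> E" then show "w \<in> {y, x0, x1}" by (rule nx)
  next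
    fix w assume "{y, w} \<in> E" then show "w \<in> {x, y0, y1}" by (rule ny)
  next
    fix t :: nat and v assume "t < 6" "v \<in> V"
    then show "q (f t) v \<in> V" "q (f t) v \<noteq> v" "q (f t) (q (f t) v) = v" "{v, q (f t) v} \<in> E"
      using qV qne qinv qE ft by auto
  next
    fix u w assume "{u, w} \<in> E"
    then show "card {t. t < 6 \<and> q (f t) u = w} = 2"
      using bij_count[OF f, of "\<lambda>t. q t u = w"] qc by simp
  qed
qed
end



theorem theorem3p2:
  fixes k :: nat
    and V :: "nat \<Rightarrow> 'a set" and E :: "nat \<Rightarrow> 'a set set"
    and x y x0 x1 y0 y1 :: "nat \<Rightarrow> 'a"
  assumes "odd k" and "k \<ge> 3"
    and "\<And>i. i < k \<Longrightarrow> cubic (V i) (E i)"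
    and "\<And>i. i < k \<Longrightarrow> bridgeless (V i) (E i)"
    and "\<And>i. i < k \<Longrightarrow> cyclically_4_edge_connected (V i) (E i)"
    and "\<And>i. i < k \<Longrightarrow> has_fulkerson_cover (V i) (E i)"
    and "\<And>i. i < k \<Longrightarrow> valid_choice (V i) (E i) (x i) (y i) (x0 i) (x1 i) (y0 i) (y1 i)"
  shows "has_fulkerson_cover (M_vertices k V x y) (M_edges k E x y x0 x1 y0 y1)"
proof -
  note kodd = assms(1) and k3 = assms(2)
  have cov: "\<forall>i. \<exists>M. i < k \<longrightarrow> ((\<forall>t<(6::nat). perfect_matching (V i) (E i) (M t)) \<and>
      (\<forall>e\<in>E i. card {t. t < 6 \<and> e \<in> M t} = 2))"
  proof
    fix i
    show "\<exists>M. i < k \<longrightarrow> ((\<forall>t<(6::nat). perfect_matching (V i) (E i) (M t)) \<and>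
      (\<forall>e\<in>E i. card {t. t < 6 \<and> e \<in> M t} = 2))"
    proof (cases "i < k")
      case True
      then obtain M where "(\<forall>t<(6::nat). perfect_matching (V i) (E i) (M t)) \<and>
        (\<forall>e\<in>E i. card {t. t < 6 \<and> e \<in> M t} = 2)"
        using assms(6)[OF True] unfolding has_fulkerson_cover_def by (elim exE)
      then show ?thesis by (intro exI[of _ M]) simp
    qed simp
  qed
  from choice[OF cov] obtain MM where MM0: "\<forall>i. i < k \<longrightarrow> ((\<forall>t<(6::nat). perfect_matching (V i) (E i) (MM i t)) \<and>
      (\<forall>e\<in>E i. card {t. t < 6 \<and> e \<in> MM i t} = 2))" ..
  have MM: "\<And>i. i < k \<Longrightarrow> (\<forall>t<(6::nat). perfect_matching (V i) (E i) (MM i t)) \<and>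
      (\<forall>e\<in>E i. card {t. t < 6 \<and> e \<in> MM i t} = 2)"
    using MM0 by simp
  define q where "q i t v = pm (MM i t) v" for i t v
  have compq: "compx (V i) (E i) (x i) (y i) (x0 i) (x1 i) (y0 i) (y1 i) (q i)" if i: "i < k" for i
  proof -
    have cub: "cubic (V i) (E i)" using assms(3)[OF i] .
    have g: "graph (V i) (E i)" using cub unfolding cubic_def by simp
    have vc: "valid_choice (V i) (E i) (x i) (y i) (x0 i) (x1 i) (y0 i) (y1 i)" using assms(7)[OF i] .
    have v: "{x i, y i} \<in> E i" "{x i, x0 i} \<in> E i" "{x i, x1 i} \<in> E i" "x0 i \<noteq> x1 i" "x0 i \<noteq> y i"
      "x1 i \<noteq> y i" "{y i, y0 i} \<in> E i" "{y i, y1 i} \<in> E i" "y0 i \<noteq> y1 i" "y0 i \<noteq> x i" "y1 i \<noteq> x i"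
      using vc unfolding valid_choice_def by auto
    have yx: "{y i, x i} \<in> E i" using v(1) by (simp add: insert_commute)
    have xV: "x i \<in> V i" "y i \<in> V i" using graph_edge_ne[OF g v(1)] by auto
    have pmt: "t < 6 \<Longrightarrow> perfect_matching (V i) (E i) (MM i t)" for t using MM[OF i] by blast
    show ?thesis
    proof (unfold_locales)
      show "valid_choice (V i) (E i) (x i) (y i) (x0 i) (x1 i) (y0 i) (y1 i)" by (rule vc)
      show "graph (V i) (E i)" by (rule g)
    next
      fix w assume "{x i, w} \<in> E i"
      then show "w \<in> {y i, x0 i, x1 i}"
        using cubic_nbrs[OF cub xV(1) v(1) v(2) v(3)] v by auto
    next
      fix w assume "{y i, w} \<in> E i"
      then show "w \<in> {x i, y0 i, y1 i}"
        using cubic_nbrs[OF cub xV(2) yx v(7) v(8)] v by auto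
    next
      fix t :: nat and u assume t: "t < 6" and u: "u \<in> V i"
      show "q i t u \<in> V i" "q i t u \<noteq> u" "q i t (q i t u) = u" "{u, q i t u} \<in> E i"
        unfolding q_def using pm_props[OF g pmt[OF t] u] pmt[OF t] unfolding perfect_matching_def by auto
    next
      fix u w assume e: "{u, w} \<in> E i"
      have u: "u \<in> V i" using graph_edge_ne[OF g e] by simp
      have "{t. t < 6 \<and> q i t u = w} = {t. t < 6 \<and> {u, w} \<in> MM i t}"
        unfolding q_def using pm_props(5)[OF g pmt u] by auto
      then show "card {t. t < 6 \<and> q i t u = w} = 2" using MM[OF i] e by simp
    qed
  qed
  define bL where "bL j = shb ((j + k - 1) mod k)" for j
  define bR where "bR j = 3 - bNf j - bL j" for j
  define good where "good j c f \<longleftrightarrow> bij_betw f {..<6} {..<6} \<and>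
     (\<forall>s<6. (q j (f s) (x j) = y j) = (s div 2 = bNf j)) \<and>
     (\<forall>s<6. s div 2 = bL j \<longrightarrow> (q j (f s) (x j) = x1 j) = (c = even s) \<and>
          (q j (f s) (y j) = y1 j) = ((q j (f (2 * bL j)) (y j) = y1 j) = even s)) \<and>
     (\<forall>s<6. s div 2 = bR j \<longrightarrow> (q j (f s) (y j) = y1 j) = (False = even s))" for j c f
  have exf: "\<exists>f. good j c f" if j: "j < k" for j c
  proof -
    note B = blocks[OF kodd k3 j]
    have a: "bNf j < 3" "bL j < 3" "bNf j \<noteq> bL j" using B unfolding bL_def by auto
    have b: "bR j < 3" "bNf j \<noteq> bR j" "bL j \<noteq> bR j" using a unfolding bR_def by arith+
    show ?thesis using compx.exists_f[OF compq[OF j] a(1,2) b(1) a(3) b(2,3), of c False]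
      unfolding good_def by blast
  qed
  define F where "F j c = (SOME f. good j c f)" for j c
  have Fg: "good j c (F j c)" if "j < k" for j c
    unfolding F_def using someI_ex[OF exf[OF that]] .
  define h where "h j r = (if j \<le> 2 then False else q j (F j (\<not> r) 4) (y j) = y1 j)" for j r
  define rho where "rho = chain h"
  define f where "f j = F j (\<not> rho ((j + k - 1) mod k))" for j
  define Q where "Q j s = q j (f j s)" for j s
  have gf: "good j (\<not> rho ((j + k - 1) mod k)) (f j)" if "j < k" for j
    unfolding f_def using Fg[OF that] .
  have rho_small: "rho j = False" if "j \<le> 2" for j
  proof (cases j)
    case 0 then show ?thesis unfolding rho_def by simp
  next
    case (Suc n) then show ?thesis unfolding rho_def using that by (simp add: h_def)
  qed
  have rho_big: "rho j = (q j (F j (\<not> rho (j - 1)) 4) (y j) = y1 j)" if j3: "3 \<le> j" for j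
  proof -
    obtain n where n: "j = Suc n" using j3 by (cases j) auto
    show ?thesis unfolding rho_def n using j3 n by (simp add: h_def)
  qed
  have compQ: "compx (V j) (E j) (x j) (y j) (x0 j) (x1 j) (y0 j) (y1 j) (Q j)" if j: "j < k" for j
  proof -
    have "bij_betw (f j) {..<6} {..<6}" using gf[OF j] unfolding good_def by blast
    from compx.comp_perm[OF compq[OF j] this]
    show ?thesis unfolding Q_def[abs_def] by simp
  qed
  have key: "\<not> (Q j s (y j) = x j \<and> Q ((j+1) mod k) s (x ((j+1) mod k)) = y ((j+1) mod k)) \<and>
     \<not> (Q j s (y j) = y0 j \<and> Q ((j+1) mod k) s (x ((j+1) mod k)) = x0 ((j+1) mod k)) \<and>
     \<not> (Q j s (y j) = y1 j \<and> Q ((j+1) mod k) s (x ((j+1) mod k)) = x1 ((j+1) mod k)) \<and>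
     (Q j s (y j) \<noteq> x j \<and> Q ((j+1) mod k) s (x ((j+1) mod k)) \<noteq> y ((j+1) mod k)) = (s div 2 = shb j)"
    if j: "j < k" and s: "s < 6" for j s
  proof -
    define j' where "j' = (j + 1) mod k"
    have j': "j' < k" "(j' + k - 1) mod k = j" using prvl[OF j k3] unfolding j'_def by auto
    note B = blocks[OF kodd k3 j] and B' = blocks[OF kodd k3 j'(1)]
    note G = gf[OF j, unfolded good_def, folded Q_def] and G' = gf[OF j'(1), unfolded good_def, folded Q_def]
    have sd: "s div 2 < 3" using s by simp
    have GN: "(Q j s (x j) = y j) = (s div 2 = bNf j)"
      using G[THEN conjunct2, THEN conjunct1, rule_format, OF s] .
    have GN': "(Q j' s (x j') = y j') = (s div 2 = bNf j')"
      using G'[THEN conjunct2, THEN conjunct1, rule_format, OF s] .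
    have GL: "s div 2 = bL j \<Longrightarrow> (Q j s (y j) = y1 j) = ((Q j (2 * bL j) (y j) = y1 j) = even s)"
      using G[THEN conjunct2, THEN conjunct2, THEN conjunct1, rule_format, OF s] by blast
    have GL': "s div 2 = bL j' \<Longrightarrow> (Q j' s (x j') = x1 j') = ((\<not> rho ((j' + k - 1) mod k)) = even s)"
      using G'[THEN conjunct2, THEN conjunct2, THEN conjunct1, rule_format, OF s] by blast
    have GR: "s div 2 = bR j \<Longrightarrow> (Q j s (y j) = y1 j) = (False = even s)"
      using G[THEN conjunct2, THEN conjunct2, THEN conjunct2, rule_format, OF s] by blast
    have Nj: "(Q j s (y j) = x j) = (s div 2 = bNf j)"
      using GN compx.qxy[OF compQ[OF j] s] by simp
    have Nj': "(Q j' s (x j') = y j') = (s div 2 = bNf j')" using GN' .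
    have c3: "(Q j s (y j) \<noteq> x j \<and> Q j' s (x j') \<noteq> y j') = (s div 2 = shb j)"
      using Nj Nj' B(3)[OF sd] unfolding j'_def by simp
    have c1: "\<not> (Q j s (y j) = x j \<and> Q j' s (x j') = y j')" using Nj Nj' B(2) unfolding j'_def by auto
    have RV: "(Q j s (y j) = y1 j) = (rho j = even s)" if sh: "s div 2 = shb j"
    proof (cases "j \<le> 2")
      case True
      then have "s div 2 = bR j" using sh B(6) unfolding bR_def bL_def by simp
      then show ?thesis using GR rho_small[OF True] by simp
    next
      case False
      then have p: "shb ((j + k - 1) mod k) = 2" "(j + k - 1) mod k = j - 1" "shb j = 2"
        using B(7) unfolding shb_def by auto
      then have "s div 2 = bL j" "bL j = 2" using sh unfolding bL_def by auto
      then have "(Q j s (y j) = y1 j) = ((Q j 4 (y j) = y1 j) = even s)" using GL by simp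
      moreover have "rho j = (Q j 4 (y j) = y1 j)" using rho_big[of j] False p(2)
        unfolding Q_def f_def by simp
      ultimately show ?thesis by simp
    qed
    have LV: "(Q j' s (x j') = x1 j') = ((\<not> rho j) = even s)" if sh: "s div 2 = shb j"
    proof -
      have "bL j' = shb j" unfolding bL_def using j' by simp
      then show ?thesis using GL' sh j'(2) by simp
    qed
    note b = compx.basic[OF compQ[OF j]] and b' = compx.basic[OF compQ[OF j'(1)]]
    have c2: "\<not> (Q j s (y j) = y0 j \<and> Q j' s (x j') = x0 j')" "\<not> (Q j s (y j) = y1 j \<and> Q j' s (x j') = x1 j')"
    proof -
      show "\<not> (Q j s (y j) = y0 j \<and> Q j' s (x j') = x0 j')"
      proof
        assume h: "Q j s (y j) = y0 j \<and> Q j' s (x j') = x0 j'"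
        then have sh: "s div 2 = shb j" using c3 b b' by auto
        show False using RV[OF sh] LV[OF sh] h b b' by auto
      qed
      show "\<not> (Q j s (y j) = y1 j \<and> Q j' s (x j') = x1 j')"
      proof
        assume h: "Q j s (y j) = y1 j \<and> Q j' s (x j') = x1 j'"
        then have sh: "s div 2 = shb j" using c3 b b' by auto
        show False using RV[OF sh] LV[OF sh] h b b' by auto
      qed
    qed
    show ?thesis using c1 c2 c3 unfolding j'_def by blast
  qed
  have A: "asm k V E x y x0 x1 y0 y1 Q"
  proof (rule asm.intro[OF kodd k3 compQ])
    fix j s :: nat assume "j < k" "s < 6"
    note kk = key[OF this]
    show "\<not> (Q j s (y j) = x j \<and> Q ((j+1) mod k) s (x ((j+1) mod k)) = y ((j+1) mod k))" using kk by blast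
    show "\<not> (Q j s (y j) = y0 j \<and> Q ((j+1) mod k) s (x ((j+1) mod k)) = x0 ((j+1) mod k))" using kk by blast
    show "\<not> (Q j s (y j) = y1 j \<and> Q ((j+1) mod k) s (x ((j+1) mod k)) = x1 ((j+1) mod k))" using kk by blast
    show "(Q j s (y j) \<noteq> x j \<and> Q ((j+1) mod k) s (x ((j+1) mod k)) \<noteq> y ((j+1) mod k)) = (s div 2 = shb j)"
      using kk by blast
  qed
  show ?thesis by (rule asm.cover[OF A])
qed

end
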